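(* Suppose $d=3$, let $D=\sum_{\rho\in\Sigma}n_\rho D_\rho$ with $(n_\rho)\in\mathbb{Z}^\Sigma$, and let $\Pi\subseteq\Sigma$. Then exactly one of the following holds: (i) $\tilde H^0(\Pi\cap\Xi;k)=0$ and the recession cone of the polyhedron $C_\Pi$ is $3$-dimensional; (ii) $\tilde H^0(\Pi\cap\Xi;k)\ne0$ and the set $C^{ss}_\Pi$ is either bounded or empty.
   Context: $k$ a field, $N\cong\mathbb{Z}^3$, $M=\operatorname{Hom}(N,\mathbb{Z})$, $\sigma\subset N_\mathbb{R}$ a strongly convex rational polyhedral cone of dimension $3$, $\Sigma=\sigma(1)$ its rays with primitive generators $n(\rho)$. $C_\Pi=\{m\in M_\mathbb{R}:\langle m,n(\rho)\rangle\le-n_\rho\ (\rho\in\Pi),\ \langle m,n(\rho)\rangle\ge-n_\rho\ (\rho\in\Sigma\setminus\Pi)\}$; $C^{ss}_\Pi$ is defined likewise but with strict inequality $<$ for $\rho\in\Pi$. The recession cone of $C_\Pi$ is the dual of $\sigma_\Pi=\operatorname{cone}(-n(\rho):\rho\in\Pi;\ n(\rho):\rho\notin\Pi)$. For $\Upsilon\subseteq\Sigma$, $\tau_\Upsilon$ is the minimal face of $\sigma$ whose rays contain $\Upsilon$; $\Xi=\{\Upsilon\subseteq\Sigma:\tau_\Upsilon\ne\sigma\}$ and $\Pi\cap\Xi=\{\Upsilon\in\Xi:\Upsilon\subseteq\Pi\}$. $\tilde H^j$ is reduced simplicial cohomology (augmented cochain complex, empty face in degree $-1$); by the paper's convention,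 for $\Pi=\emptyset$ all reduced cohomology of $\Pi\cap\Xi$ vanishes. *)

theory Defs
  imports "HOL-Analysis.Analysis"
begin

text \<open>N_R = M_R = real^3, lattices N = M = Z^3, pairing = inner product.\<close>

definition integral_vec :: "real^3 \<Rightarrow> bool" where
  "integral_vec v \<longleftrightarrow> (\<forall>i. v $ i \<in> \<int>)"

definition scrp_cone3 :: "(real^3) set \<Rightarrow> bool" where
  "scrp_cone3 \<sigma> \<longleftrightarrow>
     (\<exists>G. finite G \<and> (\<forall>g\<in>G. integral_vec g) \<and> \<sigma> = convex_cone hull G)
     \<and> \<sigma> \<inter> uminus ` \<sigma> = {0} \<and> aff_dim \<sigma> = 3"

definition rays :: "(real^3) set \<Rightarrow> (real^3) set set" where
  "rays \<sigma> = {\<rho>. \<rho> face_of \<sigma> \<and> aff_dim \<rho> = 1}"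

definition prim_gen :: "(real^3) set \<Rightarrow> real^3" where
  "prim_gen \<rho> = (THE v. v \<in> \<rho> \<and> v \<noteq> 0 \<and> integral_vec v \<and>
       (\<forall>w\<in>\<rho>. integral_vec w \<longrightarrow> (\<exists>m::nat. w = of_nat m *\<^sub>R v)))"

definition tau :: "(real^3) set \<Rightarrow> (real^3) set set \<Rightarrow> (real^3) set" where
  "tau \<sigma> \<Upsilon> = \<Inter> {F. F face_of \<sigma> \<and> (\<forall>\<rho>\<in>\<Upsilon>. \<rho> \<subseteq> F)}"

definition Xi :: "(real^3) set \<Rightarrow> (real^3) set set set" where
  "Xi \<sigma> = {\<Upsilon>. \<Upsilon> \<subseteq> rays \<sigma> \<and> tau \<sigma> \<Upsilon> \<noteq> \<sigma>}"

definition restr_Xi :: "(real^3) set \<Rightarrow> (real^3) set set \<Rightarrow> (real^3) set set set" where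
  "restr_Xi \<sigma> P = {\<Upsilon> \<in> Xi \<sigma>. \<Upsilon> \<subseteq> P}"

text \<open>Reduced simplicial cohomology in degree 0 with coefficients in the field 'k vanishes
  (augmented cochain complex): ker(delta^0 : C^0 -> C^1) = im(delta^(-1) : k -> C^0).
  A 0-cochain is a k-valued function on the vertices; it is a cocycle iff it agrees on the two
  ends of each edge; the image of delta^(-1) consists of the constant cochains.\<close>
definition reduced_H0_vanishes :: "'a set set \<Rightarrow> 'k::field itself \<Rightarrow> bool" where
  "reduced_H0_vanishes K (_::'k itself) \<longleftrightarrow>
     (\<forall>f::'a \<Rightarrow> 'k. (\<forall>u v. {u, v} \<in> K \<longrightarrow> f u = f v) \<longrightarrow>
        (\<exists>c. \<forall>v. {v} \<in> K \<longrightarrow> f v = c))"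

definition C_Pi :: "(real^3) set \<Rightarrow> ((real^3) set \<Rightarrow> int) \<Rightarrow> (real^3) set set \<Rightarrow> (real^3) set" where
  "C_Pi \<sigma> n P = {m. (\<forall>\<rho>\<in>P. m \<bullet> prim_gen \<rho> \<le> - of_int (n \<rho>)) \<and>
                      (\<forall>\<rho>\<in>rays \<sigma> - P. m \<bullet> prim_gen \<rho> \<ge> - of_int (n \<rho>))}"

definition C_ss :: "(real^3) set \<Rightarrow> ((real^3) set \<Rightarrow> int) \<Rightarrow> (real^3) set set \<Rightarrow> (real^3) set" where
  "C_ss \<sigma> n P = {m. (\<forall>\<rho>\<in>P. m \<bullet> prim_gen \<rho> < - of_int (n \<rho>)) \<and>
                      (\<forall>\<rho>\<in>rays \<sigma> - P. m \<bullet> prim_gen \<rho> \<ge> - of_int (n \<rho>))}"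

text \<open>sigma_Pi and the recession cone of C_Pi (= dual cone of sigma_Pi).\<close>
definition sigma_Pi :: "(real^3) set \<Rightarrow> (real^3) set set \<Rightarrow> (real^3) set" where
  "sigma_Pi \<sigma> P = convex_cone hull
     ((\<lambda>\<rho>. - prim_gen \<rho>) ` P \<union> prim_gen ` (rays \<sigma> - P))"

definition rec_cone_C_Pi :: "(real^3) set \<Rightarrow> (real^3) set set \<Rightarrow> (real^3) set" where
  "rec_cone_C_Pi \<sigma> P = {m. \<forall>v\<in>sigma_Pi \<sigma> P. m \<bullet> v \<ge> 0}"

end

theory Submission
  imports Defs
begin


definition det3 :: "real^3 \<Rightarrow> real^3 \<Rightarrow> real^3 \<Rightarrow> real" where
  "det3 a b c = a$1*(b$2*c$3 - b$3*c$2) + a$2*(b$3*c$1 - b$1*c$3) + a$3*(b$1*c$2 - b$2*c$1)"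

definition crs :: "real^3 \<Rightarrow> real^3 \<Rightarrow> real^3" where
  "crs a b = vector [a$2*b$3 - a$3*b$2, a$3*b$1 - a$1*b$3, a$1*b$2 - a$2*b$1]"

lemma inner3: "x \<bullet> (y::real^3) = x$1*y$1 + x$2*y$2 + x$3*y$3"
  by (simp add: inner_vec_def sum_3)

lemma crs_inner: "c \<bullet> crs a b = det3 c a b"
  by (simp add: inner3 crs_def det3_def algebra_simps)

lemma det3_linear1: "det3 (x + y) b c = det3 x b c + det3 y b c"
  "det3 (t *\<^sub>R x) b c = t * det3 x b c"
  by (simp_all add: det3_def algebra_simps)

lemma det3_linear3: "det3 a b (x + y) = det3 a b x + det3 a b y"
  "det3 a b (t *\<^sub>R x) = t * det3 a b x" "det3 a b (- x) = - det3 a b x"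
  "det3 a b (x - y) = det3 a b x - det3 a b y"
  by (simp_all add: det3_def algebra_simps)

lemma det3_cyc: "det3 a b c = det3 b c a" "det3 a b c = - det3 b a c" "det3 a b c = - det3 a c b"
  by (simp_all add: det3_def algebra_simps)

lemma det3_same: "det3 a a c = 0" "det3 a b b = 0" "det3 a b a = 0"
  by (simp_all add: det3_def algebra_simps)

lemma cramer: "det3 a b c *\<^sub>R v = det3 v b c *\<^sub>R a + det3 a v c *\<^sub>R b + det3 a b v *\<^sub>R c"
  by (simp add: vec_eq_iff forall_3 det3_def algebra_simps)

lemma cramer_inner: "det3 a b c * (u \<bullet> v) = det3 v b c * (u \<bullet> a) + det3 a v c * (u \<bullet> b) + det3 a b v * (u \<bullet> c)"
proof -
  have "u \<bullet> (det3 a b c *\<^sub>R v) = u \<bullet> (det3 v b c *\<^sub>R a + det3 a v c *\<^sub>R b + det3 a b v *\<^sub>R c)"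
    by (rule arg_cong[OF cramer])
  then show ?thesis by (simp only: inner_add_right inner_scaleR_right)
qed

lemma perp_det0:
  assumes "u \<noteq> 0" "u \<bullet> a = 0" "u \<bullet> b = 0" "u \<bullet> c = 0"
  shows "det3 a b c = 0"
proof -
  have "det3 a b c * (u \<bullet> u) = 0" using cramer_inner[of a b c u u] assms by simp
  then show ?thesis using assms(1) by simp
qed

lemma crs_self: "crs w f \<bullet> w = 0" "crs w f \<bullet> f = 0"
  by (simp_all add: inner3 crs_def algebra_simps)

lemma lagrange: "crs w f \<bullet> crs w f = (w \<bullet> w) * (f \<bullet> f) - (w \<bullet> f)^2"
  by (simp add: inner3 crs_def algebra_simps power2_eq_square)

lemma crs_crs: "crs a (crs a b) = (a \<bullet> b) *\<^sub>R a - (a \<bullet> a) *\<^sub>R b"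
  by (simp add: vec_eq_iff forall_3 inner3 crs_def algebra_simps)

lemma crs_zero_par: assumes "crs a b = 0" "a \<noteq> 0" shows "b = ((a \<bullet> b) / (a \<bullet> a)) *\<^sub>R a"
proof -
  have "crs a (crs a b) = 0" using assms(1) by (simp add: crs_def vec_eq_iff forall_3)
  then have "(a \<bullet> b) *\<^sub>R a = (a \<bullet> a) *\<^sub>R b" using crs_crs[of a b] by simp
  then show ?thesis using assms(2) by (simp add: vec_eq_iff field_simps)
qed

lemma det_crs_self: "det3 a b (crs a b) = crs a b \<bullet> crs a b"
  by (simp add: inner3 crs_def det3_def algebra_simps)

lemma span2:
  assumes "det3 b d z = 0" "det3 b d p \<noteq> 0"
  shows "\<exists>\<beta> \<delta>. z = \<beta> *\<^sub>R b + \<delta> *\<^sub>R d"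
proof -
  let ?n = "crs b d"
  have "?n \<noteq> 0" proof assume "?n = 0" 
    then have "p \<bullet> ?n = 0" by simp
    then show False using assms(2) crs_inner[of p b d] det3_cyc(1)[of p b d] by simp qed
  then have D: "det3 b d ?n \<noteq> 0" by (simp add: det_crs_self)
  have "det3 b d ?n *\<^sub>R z = det3 z d ?n *\<^sub>R b + det3 b z ?n *\<^sub>R d" using cramer[of b d ?n z] assms(1) by simp
  then have "z = (det3 z d ?n / det3 b d ?n) *\<^sub>R b + (det3 b z ?n / det3 b d ?n) *\<^sub>R d"
    using D by (simp add: vec_eq_iff field_simps)
  then show ?thesis by blast
qed


locale cone3 =
  fixes \<sigma> :: "(real^3) set"
  assumes scrp: "scrp_cone3 \<sigma>"
begin

lemma gens: "\<exists>G. finite G \<and> (\<forall>g\<in>G. integral_vec g) \<and> \<sigma> = convex_cone hull G"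
  using scrp unfolding scrp_cone3_def by blast

lemma pointed_set: "\<sigma> \<inter> uminus ` \<sigma> = {0}" and dim3: "aff_dim \<sigma> = 3"
  using scrp unfolding scrp_cone3_def by blast+

definition G where "G = (SOME G. finite G \<and> (\<forall>g\<in>G. integral_vec g) \<and> \<sigma> = convex_cone hull G)"

lemma G: "finite G" "\<forall>g\<in>G. integral_vec g" "\<sigma> = convex_cone hull G"
  using someI_ex[OF gens] unfolding G_def by blast+

lemma cc: "convex_cone \<sigma>" by (subst G(3)) (rule convex_cone_convex_cone_hull)
lemma cvx: "convex \<sigma>" using cc unfolding convex_cone_def by blast
lemma zero_in: "0 \<in> \<sigma>" by (subst G(3)) (rule convex_cone_hull_contains_0)
lemma add_in: "x \<in> \<sigma> \<Longrightarrow> y \<in> \<sigma> \<Longrightarrow> x + y \<in> \<sigma>" using cc convex_cone_add by blast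
lemma scale_in: "x \<in> \<sigma> \<Longrightarrow> 0 \<le> c \<Longrightarrow> c *\<^sub>R x \<in> \<sigma>" using cc convex_cone_scaleR by blast
lemma poly: "polyhedron \<sigma>" by (subst G(3)) (rule polyhedron_convex_cone_hull[OF G(1)])
lemma closed_sigma: "closed \<sigma>" using poly polyhedron_imp_closed by blast

lemma pointed: "x \<in> \<sigma> \<Longrightarrow> - x \<in> \<sigma> \<Longrightarrow> x = 0"
proof -
  assume a: "x \<in> \<sigma>" "- x \<in> \<sigma>"
  then have "x \<in> uminus ` \<sigma>" using image_eqI[of x uminus "- x" \<sigma>] by simp
  then show "x = 0" using a pointed_set by blast
qed

lemma sum_zero: "x \<in> \<sigma> \<Longrightarrow> y \<in> \<sigma> \<Longrightarrow> x + y = 0 \<Longrightarrow> x = 0"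
proof -
  assume a: "x \<in> \<sigma>" "y \<in> \<sigma>" "x + y = 0"
  then have "y = - x" by (simp add: eq_neg_iff_add_eq_0 add.commute)
  then show "x = 0" using a pointed by simp
qed

lemma sum_in: "finite A \<Longrightarrow> (\<And>i. i \<in> A \<Longrightarrow> f i \<in> \<sigma>) \<Longrightarrow> sum f A \<in> \<sigma>"
proof (induction A rule: finite_induct)
  case empty then show ?case using zero_in by simp
next
  case (insert x F) then show ?case using add_in by simp
qed

definition G' where "G' = G - {0}"

lemma G'_hull: "\<sigma> = convex_cone hull G'"
proof
  show "convex_cone hull G' \<subseteq> \<sigma>" unfolding G'_def by (subst (2) G(3)) (rule hull_mono, auto)
  show "\<sigma> \<subseteq> convex_cone hull G'"
  proof (subst G(3), rule hull_minimal)
    show "G \<subseteq> convex_cone hull G'"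
    proof
      fix g assume "g \<in> G"
      show "g \<in> convex_cone hull G'"
      proof (cases "g = 0")
        case True then show ?thesis using convex_cone_hull_contains_0 by simp
      next
        case False then have "g \<in> G'" unfolding G'_def using \<open>g \<in> G\<close> by simp
        then show ?thesis by (rule hull_inc)
      qed
    qed
  qed (rule convex_cone_convex_cone_hull)
qed

lemma sigma_ne0: "\<sigma> \<noteq> {0}"
proof
  assume "\<sigma> = {0}" then have "aff_dim \<sigma> = 0" by simp
  then show False using dim3 by simp
qed

lemma G'_ne: "G' \<noteq> {}"
proof
  assume "G' = {}" then have "\<sigma> = {0}" using G'_hull by simp
  then show False using sigma_ne0 by simp
qed
lemma G'_fin: "finite G'" using G(1) G'_def by simp
lemma G'_nz: "g \<in> G' \<Longrightarrow> g \<noteq> 0" unfolding G'_def by simp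
lemma G'_in: "g \<in> G' \<Longrightarrow> g \<in> \<sigma>" by (subst G'_hull) (rule hull_inc)

lemma sigma_conic: "\<sigma> = conic hull (convex hull G')"
  using G'_hull convex_cone_hull_separate_nonempty[OF G'_ne] by simp

lemma sigma_repr: "x \<in> \<sigma> \<Longrightarrow> \<exists>c z. 0 \<le> c \<and> z \<in> convex hull G' \<and> x = c *\<^sub>R z"
proof -
  assume "x \<in> \<sigma>"
  then have "x \<in> conic hull (convex hull G')" using sigma_conic by simp
  then show ?thesis unfolding conic_hull_as_image by force
qed

lemma zero_notin_hull: "0 \<notin> convex hull G'"
proof
  assume "0 \<in> convex hull G'"
  then have "\<exists>u. (\<forall>x\<in>G'. 0 \<le> u x) \<and> sum u G' = 1 \<and> (\<Sum>x\<in>G'. u x *\<^sub>R x) = 0"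
    unfolding convex_hull_finite[OF G'_fin] by simp
  then obtain u where u: "\<forall>x\<in>G'. 0 \<le> u x" "sum u G' = 1" "(\<Sum>x\<in>G'. u x *\<^sub>R x) = 0"
    by blast
  have "\<exists>g0\<in>G'. u g0 \<noteq> 0"
  proof (rule ccontr)
    assume "\<not> ?thesis"
    then have "\<forall>g\<in>G'. u g = 0" by blast
    then have "sum u G' = 0" by simp
    then show False using u(2) by simp
  qed
  then obtain g0 where g0: "g0 \<in> G'" "u g0 \<noteq> 0" by blast
  have dec: "(\<Sum>x\<in>G'. u x *\<^sub>R x) = u g0 *\<^sub>R g0 + (\<Sum>x\<in>G' - {g0}. u x *\<^sub>R x)"
    using G'_fin g0(1) by (rule sum.remove)
  have r: "(\<Sum>x\<in>G' - {g0}. u x *\<^sub>R x) \<in> \<sigma>"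
  proof (rule sum_in)
    show "finite (G' - {g0})" using G'_fin by simp
    fix x assume "x \<in> G' - {g0}"
    then show "u x *\<^sub>R x \<in> \<sigma>" using u(1) G'_in scale_in by simp
  qed
  have s: "u g0 *\<^sub>R g0 \<in> \<sigma>" using u(1) g0 G'_in scale_in by simp
  have "u g0 *\<^sub>R g0 + (\<Sum>x\<in>G' - {g0}. u x *\<^sub>R x) = 0" using dec u(3) by simp
  then have "u g0 *\<^sub>R g0 = 0" using sum_zero[OF s r] by blast
  then show False using g0 G'_nz by simp
qed

lemma u0_exists: "\<exists>u K. (\<forall>x\<in>\<sigma>. x \<noteq> 0 \<longrightarrow> 0 < u \<bullet> x) \<and> (\<forall>x\<in>\<sigma>. norm x \<le> K * (u \<bullet> x))"
proof -
  have "compact (convex hull G')" using G'_fin finite_imp_compact_convex_hull by blast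
  then have cl: "closed (convex hull G')" by (rule compact_imp_closed)
  obtain a b where ab: "a \<noteq> 0" "0 < b" "\<forall>x\<in>convex hull G'. b < a \<bullet> x"
    using separating_hyperplane_closed_0[OF convex_convex_hull cl zero_notin_hull] by blast
  define M where "M = (\<Sum>g\<in>G'. norm g)"
  have M0: "0 \<le> M" unfolding M_def by (simp add: sum_nonneg)
  have "convex hull G' \<subseteq> cball 0 M"
  proof (rule hull_minimal)
    show "G' \<subseteq> cball 0 M"
    proof
      fix g assume "g \<in> G'"
      then have "norm g \<le> M" unfolding M_def using G'_fin by (intro member_le_sum) auto
      then show "g \<in> cball 0 M" by simp
    qed
  qed (rule convex_cball)
  then have zM: "\<And>z. z \<in> convex hull G' \<Longrightarrow> norm z \<le> M" by auto
  have "\<forall>x\<in>\<sigma>. x \<noteq> 0 \<longrightarrow> 0 < a \<bullet> x"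
  proof (intro ballI impI)
    fix x assume "x \<in> \<sigma>" "x \<noteq> 0"
    then obtain c z where "0 \<le> c" "z \<in> convex hull G'" "x = c *\<^sub>R z" using sigma_repr by blast
    moreover then have "c \<noteq> 0" using \<open>x \<noteq> 0\<close> by auto
    ultimately have "0 < c" "0 < a \<bullet> z" "x = c *\<^sub>R z" using ab by auto
    then show "0 < a \<bullet> x" by simp
  qed
  moreover have "\<forall>x\<in>\<sigma>. norm x \<le> (M / b) * (a \<bullet> x)"
  proof
    fix x assume "x \<in> \<sigma>"
    then obtain c z where cz: "0 \<le> c" "z \<in> convex hull G'" "x = c *\<^sub>R z" using sigma_repr by blast
    have "norm z \<le> M" using zM cz by blast
    also have "M \<le> (M / b) * (a \<bullet> z)"
    proof -
      have "M / b * b \<le> M / b * (a \<bullet> z)" using ab cz M0 by (intro mult_left_mono) auto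
      then show ?thesis using ab by simp
    qed
    finally have "c * norm z \<le> c * ((M / b) * (a \<bullet> z))" using cz by (intro mult_left_mono) auto
    then show "norm x \<le> (M / b) * (a \<bullet> x)" using cz by (simp add: algebra_simps)
  qed
  ultimately show ?thesis by blast
qed

definition u0 where "u0 = (SOME u. \<exists>K. (\<forall>x\<in>\<sigma>. x \<noteq> 0 \<longrightarrow> 0 < u \<bullet> x) \<and> (\<forall>x\<in>\<sigma>. norm x \<le> K * (u \<bullet> x)))"

lemma u0: "\<exists>K. (\<forall>x\<in>\<sigma>. x \<noteq> 0 \<longrightarrow> 0 < u0 \<bullet> x) \<and> (\<forall>x\<in>\<sigma>. norm x \<le> K * (u0 \<bullet> x))"
  unfolding u0_def by (rule someI_ex) (rule u0_exists)

lemma u0_pos: "x \<in> \<sigma> \<Longrightarrow> x \<noteq> 0 \<Longrightarrow> 0 < u0 \<bullet> x" using u0 by blast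

lemma u0_nz: "u0 \<noteq> 0"
proof
  assume "u0 = 0"
  obtain x where "x \<in> \<sigma>" "x \<noteq> 0" using sigma_ne0 zero_in by blast
  then show False using u0_pos \<open>u0 = 0\<close> by fastforce
qed

end


context cone3 begin

abbreviation R where "R \<equiv> rays \<sigma>"

lemma ray_face: "\<rho> \<in> R \<Longrightarrow> \<rho> face_of \<sigma>" and ray_dim: "\<rho> \<in> R \<Longrightarrow> aff_dim \<rho> = 1"
  unfolding rays_def by auto

lemma ray_sub: "\<rho> \<in> R \<Longrightarrow> \<rho> \<subseteq> \<sigma>" using ray_face face_of_imp_subset by blast

lemma ray_nz_ex: "\<rho> \<in> R \<Longrightarrow> \<exists>v\<in>\<rho>. v \<noteq> 0"
proof (rule ccontr)
  assume r: "\<rho> \<in> R" and n: "\<not> (\<exists>v\<in>\<rho>. v \<noteq> 0)"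
  then have "\<rho> \<subseteq> {0}" by blast
  then have "\<rho> = {} \<or> \<rho> = {0}" by blast
  then have "aff_dim \<rho> \<le> 0" by auto
  then show False using ray_dim[OF r] by simp
qed

lemma ray_0: assumes "\<rho> \<in> R" shows "0 \<in> \<rho>"
proof -
  obtain x where x: "x \<in> \<rho>" "x \<noteq> 0" using ray_nz_ex[OF assms] by blast
  have xs: "x \<in> \<sigma>" using x ray_sub[OF assms] by blast
  have "x \<in> open_segment 0 (2 *\<^sub>R x)"
    unfolding in_segment(2) using x(2) by (intro conjI exI[of _ "1/2"]) auto
  then show ?thesis using face_ofD[OF ray_face[OF assms] _ zero_in scale_in[OF xs] x(1)] by simp
qed

lemma ray_scale: assumes "\<rho> \<in> R" "v \<in> \<rho>" "0 \<le> t" shows "t *\<^sub>R v \<in> \<rho>"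
proof (cases "t \<le> 1")
  case True
  have "t *\<^sub>R v \<in> closed_segment 0 v"
    unfolding in_segment(1) using True assms(3) by (intro exI[of _ t]) auto
  moreover have "closed_segment 0 v \<subseteq> \<rho>"
    using closed_segment_subset[OF ray_0[OF assms(1)] assms(2) face_of_imp_convex[OF ray_face[OF assms(1)]]] .
  ultimately show ?thesis by blast
next
  case False
  show ?thesis
  proof (cases "v = 0")
    case True then show ?thesis using assms by simp
  next
    case vnz: False
    have vs: "v \<in> \<sigma>" using assms ray_sub by blast
    have "v \<in> open_segment 0 (t *\<^sub>R v)"
      unfolding in_segment(2) using False vnz by (intro conjI exI[of _ "1/t"]) auto
    then show ?thesis using face_ofD[OF ray_face[OF assms(1)] _ zero_in scale_in[OF vs assms(3)] assms(2)] by simp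
  qed
qed

lemma ray_form: assumes "\<rho> \<in> R" "v \<in> \<rho>" "v \<noteq> 0" "y \<in> \<rho>" shows "\<exists>t\<ge>0. y = t *\<^sub>R v"
proof -
  have "collinear \<rho>" unfolding collinear_aff_dim using ray_dim[OF assms(1)] by simp
  moreover have "{0, v, y} \<subseteq> \<rho>" using ray_0[OF assms(1)] assms by simp
  ultimately have "collinear {0, v, y}" by (rule collinear_subset)
  then have "v = 0 \<or> y = 0 \<or> (\<exists>c. y = c *\<^sub>R v)" by (simp only: collinear_lemma)
  then have "y = 0 \<or> (\<exists>c. y = c *\<^sub>R v)" using assms(3) by simp
  then show ?thesis
  proof
    assume "y = 0" then show ?thesis by (intro exI[of _ 0]) simp
  next
    assume "\<exists>c. y = c *\<^sub>R v"
    then obtain c where c: "y = c *\<^sub>R v" by blast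
    have ys: "y \<in> \<sigma>" "v \<in> \<sigma>" using assms ray_sub by blast+
    have "c \<ge> 0"
    proof (rule ccontr)
      assume "\<not> c \<ge> 0"
      then have "0 \<le> - 1 / c" by (simp add: divide_simps)
      then have "(- 1 / c) *\<^sub>R y \<in> \<sigma>" using scale_in[OF ys(1)] by blast
      moreover have "(- 1 / c) *\<^sub>R y = - v" using c \<open>\<not> c \<ge> 0\<close> by simp
      ultimately have "v = 0" using pointed ys(2) by simp
      then show False using assms(3) by simp
    qed
    then show ?thesis using c by blast
  qed
qed

lemma ray_eq: assumes "\<rho> \<in> R" "v \<in> \<rho>" "v \<noteq> 0" shows "\<rho> = {t *\<^sub>R v | t. t \<ge> 0}"
proof
  show "\<rho> \<subseteq> {t *\<^sub>R v | t. t \<ge> 0}"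
  proof
    fix y assume "y \<in> \<rho>"
    then obtain t where "t \<ge> 0" "y = t *\<^sub>R v" using ray_form[OF assms] by blast
    then show "y \<in> {t *\<^sub>R v | t. t \<ge> 0}" by blast
  qed
  show "{t *\<^sub>R v | t. t \<ge> 0} \<subseteq> \<rho>" using ray_scale[OF assms(1,2)] by blast
qed

lemma ray_ne_sigma: "\<rho> \<in> R \<Longrightarrow> \<rho> \<noteq> \<sigma>"
proof
  assume "\<rho> \<in> R" "\<rho> = \<sigma>"
  then have "aff_dim \<sigma> = 1" using ray_dim by blast
  then show False using dim3 by simp
qed

lemma rays_finite: "finite R"
proof -
  have "R \<subseteq> {F. F face_of \<sigma>}" unfolding rays_def by blast
  then show ?thesis using finite_polyhedron_faces[OF poly] finite_subset by blast
qed

lemma ray_expose: assumes "\<rho> \<in> R" shows "\<exists>f. (\<forall>x\<in>\<sigma>. 0 \<le> f \<bullet> x) \<and> (\<forall>x\<in>\<sigma>. f \<bullet> x = 0 \<longleftrightarrow> x \<in> \<rho>)"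
proof -
  have "\<rho> exposed_face_of \<sigma>" using exposed_face_of_polyhedron[OF poly] ray_face[OF assms] by blast
  then obtain a b where ab: "\<sigma> \<subseteq> {x. a \<bullet> x \<le> b}" "\<rho> = \<sigma> \<inter> {x. a \<bullet> x = b}"
    unfolding exposed_face_of_def by blast
  have "b = 0" using ray_0[OF assms] ab(2) by auto
  then show ?thesis using ab by (intro exI[of _ "- a"]) auto
qed

end


lemma int_diff: "integral_vec x \<Longrightarrow> integral_vec y \<Longrightarrow> integral_vec (x - y)"
  unfolding integral_vec_def by (simp add: Ints_diff)

lemma int_nat_scale: "integral_vec x \<Longrightarrow> integral_vec (real m *\<^sub>R x)"
  unfolding integral_vec_def by (simp add: Ints_mult)

context cone3 begin

lemma ray_int_ex: assumes "\<rho> \<in> R" shows "\<exists>g\<in>\<rho>. g \<noteq> 0 \<and> integral_vec g"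
proof -
  obtain v where v: "v \<in> \<rho>" "v \<noteq> 0" using ray_nz_ex[OF assms] by blast
  have vs: "v \<in> \<sigma>" using v ray_sub[OF assms] by blast
  obtain c z where cz: "0 \<le> c" "z \<in> convex hull G'" "v = c *\<^sub>R z" using sigma_repr[OF vs] by blast
  have c0: "c \<noteq> 0"
  proof
    assume "c = 0" then have "v = 0" using cz(3) by simp
    then show False using v(2) by simp
  qed
  obtain f where f: "\<forall>x\<in>\<sigma>. 0 \<le> f \<bullet> x" "\<forall>x\<in>\<sigma>. f \<bullet> x = 0 \<longleftrightarrow> x \<in> \<rho>"
    using ray_expose[OF assms] by blast
  have "f \<bullet> v = 0" using f(2) vs v(1) by blast
  then have "c * (f \<bullet> z) = 0" using cz(3) by simp
  then have fz: "f \<bullet> z = 0" using c0 by simp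
  have "\<exists>u. (\<forall>x\<in>G'. 0 \<le> u x) \<and> sum u G' = 1 \<and> (\<Sum>x\<in>G'. u x *\<^sub>R x) = z"
    using cz(2) unfolding convex_hull_finite[OF G'_fin] by simp
  then obtain u where u: "\<forall>x\<in>G'. 0 \<le> u x" "sum u G' = 1" "(\<Sum>x\<in>G'. u x *\<^sub>R x) = z" by blast
  have "(\<Sum>x\<in>G'. u x * (f \<bullet> x)) = f \<bullet> z"
    unfolding u(3)[symmetric] by (simp add: inner_sum_right)
  then have s0: "(\<Sum>x\<in>G'. u x * (f \<bullet> x)) = 0" using fz by simp
  have nn: "\<forall>x\<in>G'. 0 \<le> u x * (f \<bullet> x)"
  proof
    fix x assume "x \<in> G'"
    then have "0 \<le> u x" "0 \<le> f \<bullet> x" using u(1) f(1) G'_in by auto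
    then show "0 \<le> u x * (f \<bullet> x)" by simp
  qed
  have all0: "\<forall>x\<in>G'. u x * (f \<bullet> x) = 0"
    using iffD1[OF sum_nonneg_eq_0_iff[OF G'_fin] s0] nn by blast
  have "\<exists>g0\<in>G'. u g0 \<noteq> 0"
  proof (rule ccontr)
    assume "\<not> ?thesis"
    then have "\<forall>g\<in>G'. u g = 0" by blast
    then have "sum u G' = 0" by simp
    then show False using u(2) by simp
  qed
  then obtain g0 where g0: "g0 \<in> G'" "u g0 \<noteq> 0" by blast
  then have "u g0 * (f \<bullet> g0) = 0" using all0 by blast
  then have "f \<bullet> g0 = 0" using g0(2) by simp
  then have "g0 \<in> \<rho>" using f(2) G'_in[OF g0(1)] by blast
  moreover have "g0 \<noteq> 0" using G'_nz g0 by blast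
  moreover have "integral_vec g0" using G(2) g0(1) unfolding G'_def by blast
  ultimately show ?thesis by blast
qed

definition Qp where "Qp \<rho> v \<longleftrightarrow> v \<in> \<rho> \<and> v \<noteq> 0 \<and> integral_vec v \<and>
       (\<forall>w\<in>\<rho>. integral_vec w \<longrightarrow> (\<exists>m::nat. w = of_nat m *\<^sub>R v))"

lemma Qp_ex: assumes "\<rho> \<in> R" shows "\<exists>v. Qp \<rho> v"
proof -
  obtain g where g: "g \<in> \<rho>" "g \<noteq> 0" "integral_vec g" using ray_int_ex[OF assms] by blast
  have "\<exists>i. g $ i \<noteq> 0"
  proof (rule ccontr)
    assume "\<not> ?thesis"
    then have "g = 0" by (simp add: vec_eq_iff)
    then show False using g(2) by simp
  qed
  then obtain i where i: "g $ i \<noteq> 0" by blast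
  define a where "a = \<bar>g $ i\<bar>"
  have a0: "a > 0" using i a_def by simp
  have aI: "a \<in> \<int>" using g(3) unfolding integral_vec_def a_def by simp
  then obtain ai where ai: "a = of_int ai" using Ints_cases by blast
  define na where "na = nat ai"
  have na: "real na = a" using ai a0 na_def by simp
  define Q where "Q k \<longleftrightarrow> 0 < k \<and> integral_vec ((real k / a) *\<^sub>R g)" for k
  have Qna: "Q na" unfolding Q_def using na a0 g(3) by simp
  define k0 where "k0 = (LEAST k. Q k)"
  have Qk0: "Q k0" unfolding k0_def using Qna by (rule LeastI)
  then have k0p: "0 < k0" unfolding Q_def by simp
  define v0 where "v0 = (real k0 / a) *\<^sub>R g"
  have "v0 \<in> \<rho>" unfolding v0_def using ray_scale[OF assms g(1)] a0 by simp
  moreover have "v0 \<noteq> 0" unfolding v0_def using k0p a0 g(2) by simp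
  moreover have "integral_vec v0" using Qk0 unfolding Q_def v0_def by simp
  moreover have "\<forall>w\<in>\<rho>. integral_vec w \<longrightarrow> (\<exists>m::nat. w = of_nat m *\<^sub>R v0)"
  proof (intro ballI impI)
    fix w assume w: "w \<in> \<rho>" "integral_vec w"
    obtain t where t: "t \<ge> 0" "w = t *\<^sub>R g" using ray_form[OF assms g(1,2) w(1)] by blast
    have wi: "w $ i = t * g $ i" using t by simp
    have "\<bar>w $ i\<bar> \<in> \<int>" using w(2) unfolding integral_vec_def by simp
    then obtain j where j: "\<bar>w $ i\<bar> = of_int j" using Ints_cases by blast
    have "(0::real) \<le> of_int j" using j abs_ge_zero[of "w $ i"] by simp
    then have j0: "j \<ge> 0" by simp
    define k where "k = nat j"
    have kta: "real k = t * a" using j j0 wi t(1) unfolding k_def a_def by (simp add: abs_mult)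
    define q where "q = k div k0"
    define r where "r = k mod k0"
    have kqr: "k = q * k0 + r" unfolding q_def r_def by simp
    have rk: "r < k0" unfolding r_def using k0p by simp
    have wk: "w = (real k / a) *\<^sub>R g" using t kta a0 by simp
    have "w - real q *\<^sub>R v0 = (real r / a) *\<^sub>R g"
      unfolding wk v0_def kqr by (simp add: algebra_simps add_divide_distrib)
    moreover have "integral_vec (w - real q *\<^sub>R v0)"
      using w(2) \<open>integral_vec v0\<close> by (intro int_diff int_nat_scale)
    ultimately have ir: "integral_vec ((real r / a) *\<^sub>R g)" by simp
    have "r = 0"
    proof (rule ccontr)
      assume "r \<noteq> 0"
      then have "Q r" unfolding Q_def using ir by simp
      then have "k0 \<le> r" unfolding k0_def by (rule Least_le)
      then show False using rk by simp
    qed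
    then have "w = real q *\<^sub>R v0" unfolding wk v0_def kqr by simp
    then show "\<exists>m::nat. w = of_nat m *\<^sub>R v0" by blast
  qed
  ultimately show ?thesis unfolding Qp_def by blast
qed

lemma Qp_uniq: assumes "Qp \<rho> v" "Qp \<rho> v'" shows "v = v'"
proof -
  obtain m where m: "v' = real m *\<^sub>R v" using assms unfolding Qp_def by blast
  obtain m' where m': "v = real m' *\<^sub>R v'" using assms unfolding Qp_def by blast
  have "v = real m' *\<^sub>R v'" by (rule m')
  also have "\<dots> = real m' *\<^sub>R (real m *\<^sub>R v)" by (simp only: m)
  finally have "v = (real m' * real m) *\<^sub>R v" by simp
  then have "(1 - real m' * real m) *\<^sub>R v = 0" by (simp add: algebra_simps)
  then have "real m' * real m = 1" using assms(1) unfolding Qp_def by simp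
  then have "real (m' * m) = 1" by simp
  then have "m' * m = 1" by (simp only: of_nat_eq_1_iff)
  then have "m = 1" by simp
  then show ?thesis using m by simp
qed

lemma pg: assumes "\<rho> \<in> R" shows "prim_gen \<rho> \<in> \<rho>" "prim_gen \<rho> \<noteq> 0"
proof -
  have "\<exists>!v. Qp \<rho> v" using Qp_ex[OF assms] Qp_uniq by blast
  then have "Qp \<rho> (THE v. Qp \<rho> v)" by (rule theI')
  moreover have "prim_gen \<rho> = (THE v. Qp \<rho> v)" unfolding prim_gen_def Qp_def by simp
  ultimately show "prim_gen \<rho> \<in> \<rho>" "prim_gen \<rho> \<noteq> 0" unfolding Qp_def by auto
qed

end


context cone3 begin

abbreviation pg where "pg \<equiv> prim_gen"

lemma pg_sigma: "\<rho> \<in> R \<Longrightarrow> pg \<rho> \<in> \<sigma>" using pg(1) ray_sub by blast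

lemma ray_pg: "\<rho> \<in> R \<Longrightarrow> \<rho> = {t *\<^sub>R pg \<rho> | t. t \<ge> 0}" using ray_eq pg by blast

lemma u0pg: "\<rho> \<in> R \<Longrightarrow> 0 < u0 \<bullet> pg \<rho>" using u0_pos pg_sigma pg(2) by blast

lemma u0_zero: "x \<in> \<sigma> \<Longrightarrow> u0 \<bullet> x = 0 \<Longrightarrow> x = 0" using u0_pos by fastforce

lemma u0_nn: "x \<in> \<sigma> \<Longrightarrow> 0 \<le> u0 \<bullet> x" using u0_pos[of x] by (cases "x = 0") auto

lemma ext_ray:
  assumes e: "e extreme_point_of (\<sigma> \<inter> {x. u0 \<bullet> x = 1})"
  shows "{t *\<^sub>R e | t. t \<ge> 0} \<in> R"
proof -
  define T where "T = {t *\<^sub>R e | t. t \<ge> 0}"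
  have eQ: "e \<in> \<sigma>" "u0 \<bullet> e = 1" using e unfolding extreme_point_of_def by auto
  have e0: "e \<noteq> 0" using eQ by auto
  have Ts: "T \<subseteq> \<sigma>" unfolding T_def using scale_in[OF eQ(1)] by blast
  have Tc: "convex T" unfolding convex_def T_def
  proof (intro allI impI ballI)
    fix x y u v :: real and a b
    assume "a \<in> {t *\<^sub>R e |t. 0 \<le> t}" "b \<in> {t *\<^sub>R e |t. 0 \<le> t}" "0 \<le> u" "0 \<le> v" "u + v = 1"
    then obtain s t where "a = s *\<^sub>R e" "0 \<le> s" "b = t *\<^sub>R e" "0 \<le> t" by blast
    moreover then have "u *\<^sub>R a + v *\<^sub>R b = (u * s + v * t) *\<^sub>R e" by (simp add: algebra_simps)
    moreover have "0 \<le> u * s + v * t" using calculation \<open>0 \<le> u\<close> \<open>0 \<le> v\<close> by simp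
    ultimately show "u *\<^sub>R a + v *\<^sub>R b \<in> {t *\<^sub>R e |t. 0 \<le> t}" by blast
  qed
  have Tface: "T face_of \<sigma>"
    unfolding face_of_def
  proof (intro conjI[OF Ts conjI[OF Tc]] ballI impI)
    fix a b x assume ab: "a \<in> \<sigma>" "b \<in> \<sigma>" "x \<in> T" "x \<in> open_segment a b"
    obtain t where t: "t \<ge> 0" "x = t *\<^sub>R e" using ab(3) unfolding T_def by blast
    obtain s where s: "0 < s" "s < 1" "x = (1 - s) *\<^sub>R a + s *\<^sub>R b" "a \<noteq> b"
      using ab(4) unfolding in_segment(2) by blast
    define \<alpha> where "\<alpha> = u0 \<bullet> a"
    define \<beta> where "\<beta> = u0 \<bullet> b"
    have \<alpha>0: "\<alpha> \<ge> 0" "\<beta> \<ge> 0" unfolding \<alpha>_def \<beta>_def using u0_nn ab by auto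
    have tab: "t = (1 - s) * \<alpha> + s * \<beta>"
    proof -
      have "u0 \<bullet> x = t" using t eQ by simp
      moreover have "u0 \<bullet> x = (1 - s) * \<alpha> + s * \<beta>" using s unfolding \<alpha>_def \<beta>_def by (simp add: inner_add_right)
      ultimately show ?thesis by simp
    qed
    show "a \<in> T \<and> b \<in> T"
    proof (cases "\<alpha> = 0")
      case True
      then have a0: "a = 0" using u0_zero ab(1) unfolding \<alpha>_def by blast
      then have "x = s *\<^sub>R b" using s(3) by simp
      then have "s *\<^sub>R b = t *\<^sub>R e" using t(2) by simp
      then have "(1 / s) *\<^sub>R (s *\<^sub>R b) = (1 / s) *\<^sub>R (t *\<^sub>R e)" by simp
      then have "b = (t / s) *\<^sub>R e" using s(1) by simp
      moreover have "0 \<le> t / s" using t s by simp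
      ultimately have "b \<in> T" unfolding T_def by blast
      moreover have "a \<in> T" unfolding T_def using a0 by (intro CollectI exI[of _ 0]) simp
      ultimately show ?thesis by blast
    next
      case an: False
      show ?thesis
      proof (cases "\<beta> = 0")
        case True
        then have b0: "b = 0" using u0_zero ab(2) unfolding \<beta>_def by blast
        then have "x = (1 - s) *\<^sub>R a" using s(3) by simp
        then have "(1 - s) *\<^sub>R a = t *\<^sub>R e" using t(2) by simp
        then have "(1 / (1 - s)) *\<^sub>R ((1 - s) *\<^sub>R a) = (1 / (1 - s)) *\<^sub>R (t *\<^sub>R e)" by simp
        then have "a = (t / (1 - s)) *\<^sub>R e" using s(2) by simp
        moreover have "0 \<le> t / (1 - s)" using t s by simp
        ultimately have "a \<in> T" unfolding T_def by blast
        moreover have "b \<in> T" unfolding T_def using b0 by (intro CollectI exI[of _ 0]) simp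
        ultimately show ?thesis by blast
      next
        case bn: False
        have \<alpha>p: "\<alpha> > 0" "\<beta> > 0" using an bn \<alpha>0 by auto
        have tp: "t > 0" using tab \<alpha>p s by (smt (verit) mult_pos_pos)
        define ah where "ah = (1 / \<alpha>) *\<^sub>R a"
        define bh where "bh = (1 / \<beta>) *\<^sub>R b"
        have ahQ: "ah \<in> \<sigma> \<inter> {x. u0 \<bullet> x = 1}" unfolding ah_def using ab(1) \<alpha>p scale_in \<alpha>_def by simp
        have bhQ: "bh \<in> \<sigma> \<inter> {x. u0 \<bullet> x = 1}" unfolding bh_def using ab(2) \<alpha>p scale_in \<beta>_def by simp
        define w where "w = s * \<beta> / t"
        have sb: "0 < s * \<beta>" using s \<alpha>p by simp
        have "0 < (1 - s) * \<alpha>" using s \<alpha>p by simp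
        then have sbt: "s * \<beta> < t" using tab by linarith
        have w: "0 < w" "w < 1" unfolding w_def using sb sbt tp by (simp_all add: divide_less_eq)
        have ecomb: "e = (1 - w) *\<^sub>R ah + w *\<^sub>R bh"
        proof -
          have omw: "1 - w = (1 - s) * \<alpha> / t" unfolding w_def using tab tp by (simp add: field_simps)
          have c1: "(1 - w) * (1 / \<alpha>) = (1 - s) / t" unfolding omw using \<alpha>p by simp
          have c2: "w * (1 / \<beta>) = s / t" unfolding w_def using \<alpha>p by simp
          have "(1 - w) *\<^sub>R ah + w *\<^sub>R bh = ((1 - w) * (1 / \<alpha>)) *\<^sub>R a + (w * (1 / \<beta>)) *\<^sub>R b"
            unfolding ah_def bh_def by simp
          also have "\<dots> = ((1 - s) / t) *\<^sub>R a + (s / t) *\<^sub>R b" by (simp only: c1 c2)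
          also have "\<dots> = (1 / t) *\<^sub>R ((1 - s) *\<^sub>R a + s *\<^sub>R b)" by (simp add: scaleR_add_right)
          also have "\<dots> = (1 / t) *\<^sub>R x" using s(3) by simp
          also have "\<dots> = e" using t(2) tp by simp
          finally show ?thesis by simp
        qed
        have "ah = bh"
        proof (rule ccontr)
          assume "ah \<noteq> bh"
          then have "e \<in> open_segment ah bh" unfolding in_segment(2) using w ecomb by blast
          then show False using e ahQ bhQ unfolding extreme_point_of_def by blast
        qed
        then have "e = ah" using ecomb by (simp add: algebra_simps)
        moreover have "\<alpha> *\<^sub>R ah = a" unfolding ah_def using \<alpha>p by simp
        moreover have "\<beta> *\<^sub>R bh = b" unfolding bh_def using \<alpha>p by simp
        ultimately have "a = \<alpha> *\<^sub>R e" "b = \<beta> *\<^sub>R e" using \<open>ah = bh\<close> by auto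
        then show ?thesis unfolding T_def using \<alpha>0 by blast
      qed
    qed
  qed
  have "collinear T" unfolding collinear_alt T_def by (intro exI[of _ 0] exI[of _ e]) auto
  then have d1: "aff_dim T \<le> 1" using collinear_aff_dim by blast
  have "{0, e} \<subseteq> T" unfolding T_def using e0
    by (auto intro: exI[of _ 0] exI[of _ 1])
  then have "aff_dim {0, e} \<le> aff_dim T" by (rule aff_dim_subset)
  then have "aff_dim T = 1" using d1 e0 by simp
  then show ?thesis unfolding rays_def T_def[symmetric] using Tface by blast
qed

lemma sigma_gen: "\<sigma> = convex_cone hull (pg ` R)"
proof
  show "convex_cone hull (pg ` R) \<subseteq> \<sigma>"
    by (rule hull_minimal) (use pg_sigma cc in auto)
next
  obtain K where K: "\<forall>x\<in>\<sigma>. norm x \<le> K * (u0 \<bullet> x)" using u0 by blast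
  define Q where "Q = \<sigma> \<inter> {x. u0 \<bullet> x = 1}"
  have "closed Q" unfolding Q_def using closed_sigma closed_hyperplane by blast
  moreover have "bounded Q" unfolding bounded_iff Q_def using K by (intro exI[of _ K]) auto
  ultimately have cQ: "compact Q" using compact_eq_bounded_closed by blast
  have vQ: "convex Q" unfolding Q_def using cvx convex_hyperplane by (rule convex_Int)
  have KM: "Q = convex hull {x. x extreme_point_of Q}" by (rule Krein_Milman_Minkowski[OF cQ vQ])
  have ext_in: "{x. x extreme_point_of Q} \<subseteq> convex_cone hull (pg ` R)"
  proof
    fix e assume "e \<in> {x. x extreme_point_of Q}"
    then have ee: "e extreme_point_of Q" by simp
    define T where "T = {t *\<^sub>R e | t. t \<ge> 0}"
    have TR: "T \<in> R" using ext_ray ee unfolding Q_def T_def by blast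
    have e0: "e \<noteq> 0" "e \<in> \<sigma>" using ee unfolding extreme_point_of_def Q_def by auto
    obtain t0 where t0: "t0 \<ge> 0" "pg T = t0 *\<^sub>R e" using pg(1)[OF TR] unfolding T_def by blast
    have "t0 \<noteq> 0" using pg(2)[OF TR] t0 by auto
    then have ee: "e = (1 / t0) *\<^sub>R pg T" using t0 by simp
    have "pg T \<in> convex_cone hull (pg ` R)" using TR by (intro hull_inc) blast
    then have "(1 / t0) *\<^sub>R pg T \<in> convex_cone hull (pg ` R)"
      using t0(1) by (intro convex_cone_scaleR[OF convex_cone_convex_cone_hull]) auto
    then show "e \<in> convex_cone hull (pg ` R)" using ee by simp
  qed
  have Qsub: "Q \<subseteq> convex_cone hull (pg ` R)"
  proof -
    have "convex hull {x. x extreme_point_of Q} \<subseteq> convex_cone hull (pg ` R)"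
      using ext_in convex_cone_convex_cone_hull unfolding convex_cone_def by (intro hull_minimal) auto
    then show ?thesis using KM by simp
  qed
  show "\<sigma> \<subseteq> convex_cone hull (pg ` R)"
  proof
    fix x assume xs: "x \<in> \<sigma>"
    show "x \<in> convex_cone hull (pg ` R)"
    proof (cases "x = 0")
      case True then show ?thesis using convex_cone_hull_contains_0 by simp
    next
      case False
      then have p: "0 < u0 \<bullet> x" using u0_pos xs by blast
      have "(1 / (u0 \<bullet> x)) *\<^sub>R x \<in> Q" unfolding Q_def using p scale_in[OF xs] by simp
      then have h1: "(1 / (u0 \<bullet> x)) *\<^sub>R x \<in> convex_cone hull (pg ` R)" using Qsub by blast
      have "(u0 \<bullet> x) *\<^sub>R ((1 / (u0 \<bullet> x)) *\<^sub>R x) \<in> convex_cone hull (pg ` R)"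
        by (rule convex_cone_scaleR[OF convex_cone_convex_cone_hull _ h1]) (use p in simp)
      moreover have "(u0 \<bullet> x) *\<^sub>R ((1 / (u0 \<bullet> x)) *\<^sub>R x) = x" using p by simp
      ultimately show ?thesis by simp
    qed
  qed
qed

end


context cone3 begin

lemma nonneg_sigma: assumes "\<forall>\<rho>\<in>R. 0 \<le> u \<bullet> pg \<rho>" "x \<in> \<sigma>" shows "0 \<le> u \<bullet> x"
proof -
  have "convex_cone hull (pg ` R) \<subseteq> {x. 0 \<le> u \<bullet> x}"
    by (rule hull_minimal) (use assms(1) convex_cone_halfspace_ge in auto)
  then have "\<sigma> \<subseteq> {x. 0 \<le> u \<bullet> x}" by (subst sigma_gen)
  then show ?thesis using assms(2) by blast
qed

lemma zero_sigma: assumes "\<forall>\<rho>\<in>R. u \<bullet> pg \<rho> = 0" shows "u = 0"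
proof (rule ccontr)
  assume u: "u \<noteq> 0"
  have "\<forall>x\<in>\<sigma>. 0 \<le> u \<bullet> x" using nonneg_sigma assms by simp
  moreover have "\<forall>x\<in>\<sigma>. 0 \<le> (- u) \<bullet> x" using nonneg_sigma[of "- u"] assms by simp
  ultimately have "\<sigma> \<subseteq> {x. u \<bullet> x = 0}"
  proof -
    assume a1: "\<forall>x\<in>\<sigma>. 0 \<le> u \<bullet> x" and a2: "\<forall>x\<in>\<sigma>. 0 \<le> (- u) \<bullet> x"
    show ?thesis
    proof
      fix x assume "x \<in> \<sigma>"
      then have "0 \<le> u \<bullet> x" "0 \<le> (- u) \<bullet> x" using a1 a2 by blast+
      then show "x \<in> {x. u \<bullet> x = 0}" by simp
    qed
  qed
  then have "aff_dim \<sigma> \<le> aff_dim {x. u \<bullet> x = 0}" by (rule aff_dim_subset)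
  also have "\<dots> = 2" using u by simp
  finally show False using dim3 by simp
qed

lemma R_ne: "R \<noteq> {}"
proof
  assume "R = {}"
  then have "convex_cone hull (pg ` R) = {0}" by simp
  then have "\<sigma> = {0}" by (subst sigma_gen)
  then show False using sigma_ne0 by simp
qed

definition fx where "fx \<rho> = (SOME f. (\<forall>x\<in>\<sigma>. 0 \<le> f \<bullet> x) \<and> (\<forall>x\<in>\<sigma>. f \<bullet> x = 0 \<longleftrightarrow> x \<in> \<rho>))"

lemma fx: assumes "\<rho> \<in> R" shows "\<forall>x\<in>\<sigma>. 0 \<le> fx \<rho> \<bullet> x" "\<forall>x\<in>\<sigma>. fx \<rho> \<bullet> x = 0 \<longleftrightarrow> x \<in> \<rho>"
proof -
  have "(\<forall>x\<in>\<sigma>. 0 \<le> fx \<rho> \<bullet> x) \<and> (\<forall>x\<in>\<sigma>. fx \<rho> \<bullet> x = 0 \<longleftrightarrow> x \<in> \<rho>)"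
    unfolding fx_def by (rule someI_ex) (rule ray_expose[OF assms])
  then show "\<forall>x\<in>\<sigma>. 0 \<le> fx \<rho> \<bullet> x" "\<forall>x\<in>\<sigma>. fx \<rho> \<bullet> x = 0 \<longleftrightarrow> x \<in> \<rho>" by blast+
qed

lemma fx_nn: "\<rho> \<in> R \<Longrightarrow> x \<in> \<sigma> \<Longrightarrow> 0 \<le> fx \<rho> \<bullet> x" using fx(1) by blast

lemma fx_self: "\<rho> \<in> R \<Longrightarrow> fx \<rho> \<bullet> pg \<rho> = 0" using fx(2) pg pg_sigma by blast

lemma ray_uniq: assumes "\<rho> \<in> R" "\<rho>' \<in> R" "pg \<rho>' \<in> \<rho>" shows "\<rho> = \<rho>'"
proof -
  have "\<rho> = {t *\<^sub>R pg \<rho>' | t. t \<ge> 0}" using ray_eq[OF assms(1,3) pg(2)[OF assms(2)]] .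
  also have "\<dots> = \<rho>'" using ray_pg[OF assms(2)] by simp
  finally show ?thesis .
qed

lemma fx_pos: assumes "\<rho> \<in> R" "\<rho>' \<in> R" "\<rho>' \<noteq> \<rho>" shows "0 < fx \<rho> \<bullet> pg \<rho>'"
proof -
  have "fx \<rho> \<bullet> pg \<rho>' \<noteq> 0"
  proof
    assume "fx \<rho> \<bullet> pg \<rho>' = 0"
    then have "pg \<rho>' \<in> \<rho>" using fx(2)[OF assms(1)] pg_sigma[OF assms(2)] by blast
    then show False using ray_uniq assms by blast
  qed
  then show ?thesis using fx_nn[OF assms(1) pg_sigma[OF assms(2)]] by simp
qed

lemma not_par: assumes "\<rho> \<in> R" "\<rho>' \<in> R" "\<rho>' \<noteq> \<rho>" shows "pg \<rho>' \<noteq> t *\<^sub>R pg \<rho>"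
proof
  assume "pg \<rho>' = t *\<^sub>R pg \<rho>"
  then have "fx \<rho> \<bullet> pg \<rho>' = 0" using fx_self[OF assms(1)] by simp
  then show False using fx_pos[OF assms] by simp
qed

lemma crs_nz: assumes "\<rho> \<in> R" "\<rho>' \<in> R" "\<rho>' \<noteq> \<rho>" shows "crs (pg \<rho>) (pg \<rho>') \<noteq> 0"
proof
  assume "crs (pg \<rho>) (pg \<rho>') = 0"
  then have "pg \<rho>' = ((pg \<rho> \<bullet> pg \<rho>') / (pg \<rho> \<bullet> pg \<rho>)) *\<^sub>R pg \<rho>"
    using crs_zero_par pg(2)[OF assms(1)] by blast
  then show False using not_par[OF assms] by blast
qed

lemma I3: assumes "a \<in> R" "b \<in> R" "c \<in> R" "a \<noteq> b" "a \<noteq> c" "b \<noteq> c"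
  shows "det3 (pg a) (pg b) (pg c) \<noteq> 0"
proof
  assume d: "det3 (pg a) (pg b) (pg c) = 0"
  let ?n = "crs (pg a) (pg b)"
  have "?n \<noteq> 0" using crs_nz assms by blast
  then have "det3 (pg a) (pg b) ?n \<noteq> 0" by (simp add: det_crs_self)
  then obtain \<beta> \<delta> where c: "pg c = \<beta> *\<^sub>R pg a + \<delta> *\<^sub>R pg b" using span2[OF d] by blast
  have "fx a \<bullet> pg c = \<delta> * (fx a \<bullet> pg b)" using c fx_self[OF assms(1)] by (simp add: inner_add_right)
  moreover have "0 < fx a \<bullet> pg c" "0 < fx a \<bullet> pg b" using fx_pos assms by auto
  ultimately have dp: "0 < \<delta>" by (simp add: zero_less_mult_iff)
  have "fx b \<bullet> pg c = \<beta> * (fx b \<bullet> pg a)" using c fx_self[OF assms(2)] by (simp add: inner_add_right)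
  moreover have "0 < fx b \<bullet> pg c" "0 < fx b \<bullet> pg a" using fx_pos assms by auto
  ultimately have bp: "0 < \<beta>" by (simp add: zero_less_mult_iff)
  have "fx c \<bullet> pg c = \<beta> * (fx c \<bullet> pg a) + \<delta> * (fx c \<bullet> pg b)" using c by (simp add: inner_add_right)
  moreover have "0 < fx c \<bullet> pg a" "0 < fx c \<bullet> pg b" using fx_pos assms by auto
  ultimately have "0 < fx c \<bullet> pg c" using dp bp by (simp add: add_pos_pos)
  then show False using fx_self[OF assms(3)] by simp
qed

definition adj where "adj \<rho> \<rho>' \<longleftrightarrow> (\<exists>F. F face_of \<sigma> \<and> F \<noteq> \<sigma> \<and> \<rho> \<subseteq> F \<and> \<rho>' \<subseteq> F)"

lemma tau_ne_iff: assumes sub: "\<forall>\<rho>\<in>\<Upsilon>. \<rho> \<subseteq> \<sigma>"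
  shows "tau \<sigma> \<Upsilon> \<noteq> \<sigma> \<longleftrightarrow> (\<exists>F. F face_of \<sigma> \<and> F \<noteq> \<sigma> \<and> (\<forall>\<rho>\<in>\<Upsilon>. \<rho> \<subseteq> F))"
proof
  assume "tau \<sigma> \<Upsilon> \<noteq> \<sigma>"
  show "\<exists>F. F face_of \<sigma> \<and> F \<noteq> \<sigma> \<and> (\<forall>\<rho>\<in>\<Upsilon>. \<rho> \<subseteq> F)"
  proof (rule ccontr)
    assume n: "\<not> ?thesis"
    have E: "{F. F face_of \<sigma> \<and> (\<forall>\<rho>\<in>\<Upsilon>. \<rho> \<subseteq> F)} = {\<sigma>}"
    proof
      show "{F. F face_of \<sigma> \<and> (\<forall>\<rho>\<in>\<Upsilon>. \<rho> \<subseteq> F)} \<subseteq> {\<sigma>}" using n by blast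
      show "{\<sigma>} \<subseteq> {F. F face_of \<sigma> \<and> (\<forall>\<rho>\<in>\<Upsilon>. \<rho> \<subseteq> F)}" using face_of_refl[OF cvx] sub by blast
    qed
    have "tau \<sigma> \<Upsilon> = \<sigma>" unfolding tau_def E by simp
    then show False using \<open>tau \<sigma> \<Upsilon> \<noteq> \<sigma>\<close> by simp
  qed
next
  assume "\<exists>F. F face_of \<sigma> \<and> F \<noteq> \<sigma> \<and> (\<forall>\<rho>\<in>\<Upsilon>. \<rho> \<subseteq> F)"
  then obtain F where F: "F face_of \<sigma>" "F \<noteq> \<sigma>" "\<forall>\<rho>\<in>\<Upsilon>. \<rho> \<subseteq> F" by blast
  then have "tau \<sigma> \<Upsilon> \<subseteq> F" unfolding tau_def by blast
  moreover have "F \<subseteq> \<sigma>" using F face_of_imp_subset by blast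
  ultimately show "tau \<sigma> \<Upsilon> \<noteq> \<sigma>" using F(2) by blast
qed

lemma adj_sup: assumes "adj \<rho> \<rho>'" "\<rho> \<in> R" "\<rho>' \<in> R"
  shows "\<exists>u. u \<noteq> 0 \<and> (\<forall>x\<in>\<sigma>. 0 \<le> u \<bullet> x) \<and> u \<bullet> pg \<rho> = 0 \<and> u \<bullet> pg \<rho>' = 0"
proof -
  obtain F where F: "F face_of \<sigma>" "F \<noteq> \<sigma>" "\<rho> \<subseteq> F" "\<rho>' \<subseteq> F" using assms(1) unfolding adj_def by blast
  have "F exposed_face_of \<sigma>" using exposed_face_of_polyhedron[OF poly] F(1) by blast
  then obtain a b where ab: "\<sigma> \<subseteq> {x. a \<bullet> x \<le> b}" "F = \<sigma> \<inter> {x. a \<bullet> x = b}"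
    unfolding exposed_face_of_def by blast
  have "0 \<in> F" using ray_0[OF assms(2)] F(3) by blast
  then have b0: "b = 0" using ab(2) by simp
  have a0: "a \<noteq> 0"
  proof
    assume "a = 0" then have "F = \<sigma>" using ab(2) b0 by simp
    then show False using F(2) by simp
  qed
  have "a \<bullet> pg \<rho> = 0" "a \<bullet> pg \<rho>' = 0" using pg(1) assms F ab(2) b0 by blast+
  then show ?thesis using a0 ab(1) b0 by (intro exI[of _ "- a"]) auto
qed

lemma sup_adj: assumes "\<rho> \<in> R" "\<rho>' \<in> R" "\<forall>x\<in>\<sigma>. 0 \<le> u \<bullet> x" "u \<bullet> pg \<rho> = 0" "u \<bullet> pg \<rho>' = 0"
   "y \<in> \<sigma>" "u \<bullet> y \<noteq> 0"
  shows "adj \<rho> \<rho>'"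
proof -
  define F where "F = \<sigma> \<inter> {x. u \<bullet> x = 0}"
  have "F face_of \<sigma>" unfolding F_def using face_of_Int_supporting_hyperplane_ge[OF cvx, where a=u and b=0] assms(3) by simp
  moreover have "F \<noteq> \<sigma>" using assms(6,7) unfolding F_def by blast
  moreover have "\<rho> \<subseteq> F"
  proof
    fix x assume "x \<in> \<rho>"
    then obtain t where "x = t *\<^sub>R pg \<rho>" using ray_pg[OF assms(1)] by blast
    then show "x \<in> F" unfolding F_def using assms(4) \<open>x \<in> \<rho>\<close> ray_sub[OF assms(1)] by auto
  qed
  moreover have "\<rho>' \<subseteq> F"
  proof
    fix x assume "x \<in> \<rho>'"
    then obtain t where "x = t *\<^sub>R pg \<rho>'" using ray_pg[OF assms(2)] by blast
    then show "x \<in> F" unfolding F_def using assms(5) \<open>x \<in> \<rho>'\<close> ray_sub[OF assms(2)] by auto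
  qed
  ultimately show ?thesis unfolding adj_def by blast
qed

lemma single_in: assumes "P \<subseteq> R" "\<rho> \<in> P" shows "{\<rho>} \<in> restr_Xi \<sigma> P"
proof -
  have r: "\<rho> \<in> R" using assms by blast
  have "\<forall>x\<in>{\<rho>}. x \<subseteq> \<sigma>" using ray_sub[OF r] by simp
  moreover have "\<exists>F. F face_of \<sigma> \<and> F \<noteq> \<sigma> \<and> (\<forall>x\<in>{\<rho>}. x \<subseteq> F)"
    using ray_face[OF r] ray_ne_sigma[OF r] by blast
  ultimately have "tau \<sigma> {\<rho>} \<noteq> \<sigma>" by (rule iffD2[OF tau_ne_iff])
  then show ?thesis unfolding restr_Xi_def Xi_def using assms by blast
qed

lemma single_D: "{\<rho>} \<in> restr_Xi \<sigma> P \<Longrightarrow> \<rho> \<in> P" unfolding restr_Xi_def by blast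

lemma pair_in: assumes "P \<subseteq> R" "\<rho> \<in> P" "\<rho>' \<in> P" "adj \<rho> \<rho>'" shows "{\<rho>, \<rho>'} \<in> restr_Xi \<sigma> P"
proof -
  have "\<forall>x\<in>{\<rho>, \<rho>'}. x \<subseteq> \<sigma>" using ray_sub assms by blast
  moreover have "\<exists>F. F face_of \<sigma> \<and> F \<noteq> \<sigma> \<and> (\<forall>x\<in>{\<rho>, \<rho>'}. x \<subseteq> F)"
    using assms(4) unfolding adj_def by blast
  ultimately have "tau \<sigma> {\<rho>, \<rho>'} \<noteq> \<sigma>" by (rule iffD2[OF tau_ne_iff])
  then show ?thesis unfolding restr_Xi_def Xi_def using assms by blast
qed

lemma pair_D: assumes "{\<rho>, \<rho>'} \<in> restr_Xi \<sigma> P" shows "\<rho> \<in> P" "\<rho>' \<in> P" "adj \<rho> \<rho>'"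
proof -
  show "\<rho> \<in> P" "\<rho>' \<in> P" using assms unfolding restr_Xi_def by blast+
  have "{\<rho>, \<rho>'} \<in> Xi \<sigma>" using assms unfolding restr_Xi_def by blast
  then have t: "tau \<sigma> {\<rho>, \<rho>'} \<noteq> \<sigma>" and s: "{\<rho>, \<rho>'} \<subseteq> R" unfolding Xi_def by blast+
  have "\<forall>x\<in>{\<rho>, \<rho>'}. x \<subseteq> \<sigma>" using ray_sub s by blast
  then have "\<exists>F. F face_of \<sigma> \<and> F \<noteq> \<sigma> \<and> (\<forall>x\<in>{\<rho>, \<rho>'}. x \<subseteq> F)" using iffD1[OF tau_ne_iff t] by blast
  then show "adj \<rho> \<rho>'" unfolding adj_def by blast
qed

end


context cone3 begin

lemma descent:
  assumes w: "w \<in> R" and hw: "h \<bullet> pg w = 0" and v: "v \<in> R" "h \<bullet> pg v < 0"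
  shows "\<exists>a\<in>R. a \<noteq> w \<and> h \<bullet> pg a < 0 \<and> adj w a"
proof -
  define W where "W = pg w"
  define f where "f = fx w"
  define R' where "R' = R - {w}"
  have vw: "v \<noteq> w" using v hw by auto
  have vR': "v \<in> R'" unfolding R'_def using v vw by simp
  have finR': "finite R'" unfolding R'_def using rays_finite by simp
  have neR': "R' \<noteq> {}" using vR' by blast
  have fpos: "\<And>\<rho>. \<rho> \<in> R' \<Longrightarrow> 0 < f \<bullet> pg \<rho>" unfolding R'_def f_def using fx_pos w by simp
  have fW: "f \<bullet> W = 0" unfolding f_def W_def using fx_self w by simp
  have fnz: "f \<noteq> 0" using fpos[OF vR'] by auto
  have Wnz: "W \<noteq> 0" unfolding W_def using pg(2) w by simp
  define g where "g = crs W f"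
  have gW: "g \<bullet> W = 0" unfolding g_def by (rule crs_self(1))
  have gf: "g \<bullet> f = 0" unfolding g_def by (rule crs_self(2))
  have "g \<bullet> g = (W \<bullet> W) * (f \<bullet> f)" unfolding g_def lagrange using fW by (simp add: inner_commute)
  moreover have "0 < (W \<bullet> W) * (f \<bullet> f)" using Wnz fnz by simp
  ultimately have gnz: "g \<noteq> 0" by auto
  define q where "q \<rho> = (g \<bullet> pg \<rho>) / (f \<bullet> pg \<rho>)" for \<rho>
  have qeq: "g \<bullet> pg \<rho> = (f \<bullet> pg \<rho>) * q \<rho>" if r: "\<rho> \<in> R'" for \<rho>
  proof -
    have "f \<bullet> pg \<rho> \<noteq> 0" using fpos[OF r] by simp
    then show ?thesis unfolding q_def by simp
  qed
  define mn where "mn = Min (q ` R')"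
  define mx where "mx = Max (q ` R')"
  have "mn \<in> q ` R'" unfolding mn_def using finR' neR' by (intro Min_in) auto
  then obtain a where a: "a \<in> R'" "q a = mn" by (metis imageE)
  have "mx \<in> q ` R'" unfolding mx_def using finR' neR' by (intro Max_in) auto
  then obtain c where c: "c \<in> R'" "q c = mx" by (metis imageE)
  have amin: "\<And>\<rho>. \<rho> \<in> R' \<Longrightarrow> q a \<le> q \<rho>" using a finR' unfolding mn_def by simp
  have cmax: "\<And>\<rho>. \<rho> \<in> R' \<Longrightarrow> q \<rho> \<le> q c" using c finR' unfolding mx_def by simp
  define ka where "ka = g - q a *\<^sub>R f"
  define kc where "kc = q c *\<^sub>R f - g"
  have ka_pg: "\<And>\<rho>. \<rho> \<in> R' \<Longrightarrow> ka \<bullet> pg \<rho> = (f \<bullet> pg \<rho>) * (q \<rho> - q a)"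
    unfolding ka_def using qeq by (simp add: inner_diff_left algebra_simps)
  have kc_pg: "\<And>\<rho>. \<rho> \<in> R' \<Longrightarrow> kc \<bullet> pg \<rho> = (f \<bullet> pg \<rho>) * (q c - q \<rho>)"
    unfolding kc_def using qeq by (simp add: inner_diff_left algebra_simps)
  have kaW: "ka \<bullet> W = 0" unfolding ka_def using gW fW by (simp add: inner_diff_left)
  have kcW: "kc \<bullet> W = 0" unfolding kc_def using gW fW by (simp add: inner_diff_left)
  have ka_R: "\<forall>\<rho>\<in>R. 0 \<le> ka \<bullet> pg \<rho>"
  proof
    fix \<rho> assume r: "\<rho> \<in> R"
    show "0 \<le> ka \<bullet> pg \<rho>"
    proof (cases "\<rho> = w")
      case True then show ?thesis using kaW unfolding W_def by simp
    next
      case False then have "\<rho> \<in> R'" unfolding R'_def using r by simp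
      then have "0 < f \<bullet> pg \<rho>" "q a \<le> q \<rho>" "ka \<bullet> pg \<rho> = (f \<bullet> pg \<rho>) * (q \<rho> - q a)"
        using ka_pg fpos amin by auto
      then show ?thesis by simp
    qed
  qed
  have kc_R: "\<forall>\<rho>\<in>R. 0 \<le> kc \<bullet> pg \<rho>"
  proof
    fix \<rho> assume r: "\<rho> \<in> R"
    show "0 \<le> kc \<bullet> pg \<rho>"
    proof (cases "\<rho> = w")
      case True then show ?thesis using kcW unfolding W_def by simp
    next
      case False then have "\<rho> \<in> R'" unfolding R'_def using r by simp
      then have "0 < f \<bullet> pg \<rho>" "q \<rho> \<le> q c" "kc \<bullet> pg \<rho> = (f \<bullet> pg \<rho>) * (q c - q \<rho>)"
        using kc_pg fpos cmax by auto
      then show ?thesis by simp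
    qed
  qed
  have qac: "q a < q c"
  proof (rule ccontr)
    assume "\<not> q a < q c"
    then have eq: "\<And>\<rho>. \<rho> \<in> R' \<Longrightarrow> q \<rho> = q a" using amin cmax by (meson antisym order_trans not_less)
    have "\<forall>\<rho>\<in>R. ka \<bullet> pg \<rho> = 0"
    proof
      fix \<rho> assume r: "\<rho> \<in> R"
      show "ka \<bullet> pg \<rho> = 0"
      proof (cases "\<rho> = w")
        case True then show ?thesis using kaW unfolding W_def by simp
      next
        case False then have "\<rho> \<in> R'" unfolding R'_def using r by simp
        then show ?thesis using ka_pg eq by simp
      qed
    qed
    then have "ka = 0" by (rule zero_sigma)
    then have ge: "g = q a *\<^sub>R f" unfolding ka_def by simp
    then have "q a * (f \<bullet> f) = 0" using gf by simp
    then have "q a = 0" using fnz by simp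
    then show False using ge gnz by simp
  qed
  have ac: "a \<noteq> c" using qac by auto
  have aR: "a \<in> R" "a \<noteq> w" and cR: "c \<in> R" "c \<noteq> w" using a c unfolding R'_def by auto
  have kaC: "0 < ka \<bullet> pg c" using ka_pg[OF c(1)] fpos[OF c(1)] qac by simp
  have kcA: "0 < kc \<bullet> pg a" using kc_pg[OF a(1)] fpos[OF a(1)] qac by simp
  have kaA: "ka \<bullet> pg a = 0" using ka_pg[OF a(1)] by simp
  have kcC: "kc \<bullet> pg c = 0" using kc_pg[OF c(1)] by simp
  have adja: "adj w a"
    using sup_adj[OF w aR(1) _ kaW[unfolded W_def] kaA pg_sigma[OF cR(1)]] nonneg_sigma[OF ka_R] kaC by simp
  have adjc: "adj w c"
    using sup_adj[OF w cR(1) _ kcW[unfolded W_def] kcC pg_sigma[OF aR(1)]] nonneg_sigma[OF kc_R] kcA by simp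
  define A where "A = pg a"
  define C where "C = pg c"
  define V where "V = pg v"
  define D where "D = det3 A C W"
  have D0: "D \<noteq> 0" unfolding D_def A_def C_def W_def using I3[OF aR(1) cR(1) w ac aR(2) cR(2)] .
  define x1 where "x1 = det3 V C W"
  define x2 where "x2 = det3 A V W"
  have cr: "\<And>u. D * (u \<bullet> V) = x1 * (u \<bullet> A) + x2 * (u \<bullet> C) + det3 A C V * (u \<bullet> W)"
    unfolding D_def x1_def x2_def by (rule cramer_inner)
  have e1: "D * (ka \<bullet> V) = x2 * (ka \<bullet> C)" using cr[of ka] kaA kaW unfolding A_def by simp
  have e2: "D * (kc \<bullet> V) = x1 * (kc \<bullet> A)" using cr[of kc] kcC kcW unfolding C_def by simp
  have e3: "D * (h \<bullet> V) = x1 * (h \<bullet> A) + x2 * (h \<bullet> C)" using cr[of h] hw unfolding W_def by simp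
  have kaV: "0 \<le> ka \<bullet> V" unfolding V_def using ka_R v(1) by simp
  have kcV: "0 \<le> kc \<bullet> V" unfolding V_def using kc_R v(1) by simp
  have x2D: "0 \<le> x2 * D"
  proof (rule ccontr)
    assume "\<not> 0 \<le> x2 * D"
    then have "x2 * D * (ka \<bullet> C) < 0" using kaC unfolding C_def by (simp add: mult_neg_pos)
    moreover have "x2 * D * (ka \<bullet> C) = (D * D) * (ka \<bullet> V)" using e1 by (simp add: algebra_simps)
    moreover have "0 \<le> (D * D) * (ka \<bullet> V)" using kaV by simp
    ultimately show False by simp
  qed
  have x1D: "0 \<le> x1 * D"
  proof (rule ccontr)
    assume "\<not> 0 \<le> x1 * D"
    then have "x1 * D * (kc \<bullet> A) < 0" using kcA unfolding A_def by (simp add: mult_neg_pos)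
    moreover have "x1 * D * (kc \<bullet> A) = (D * D) * (kc \<bullet> V)" using e2 by (simp add: algebra_simps)
    moreover have "0 \<le> (D * D) * (kc \<bullet> V)" using kcV by simp
    ultimately show False by simp
  qed
  have "h \<bullet> A < 0 \<or> h \<bullet> C < 0"
  proof (rule ccontr)
    assume "\<not> ?thesis"
    then have hA: "0 \<le> h \<bullet> A" and hC: "0 \<le> h \<bullet> C" by auto
    have "(D * D) * (h \<bullet> V) = (x1 * D) * (h \<bullet> A) + (x2 * D) * (h \<bullet> C)" using e3
      by (metis (no_types, lifting) distrib_left mult.commute mult.left_commute)
    moreover have "0 \<le> (x1 * D) * (h \<bullet> A) + (x2 * D) * (h \<bullet> C)" using hA hC x1D x2D by simp
    moreover have "(D * D) * (h \<bullet> V) < 0"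
    proof -
      have "0 < D * D" using D0 by (auto simp: zero_less_mult_iff linorder_neq_iff)
      then show ?thesis using v(2) unfolding V_def by (rule mult_pos_neg)
    qed
    ultimately show False by simp
  qed
  then show ?thesis using aR cR adja adjc unfolding A_def C_def by blast
qed

end


context cone3 begin

lemma conn:
  assumes P: "P \<subseteq> R" and npar: "\<forall>c. m \<noteq> c *\<^sub>R u0"
    and neg: "\<forall>\<rho>\<in>R. m \<bullet> pg \<rho> < 0 \<longrightarrow> \<rho> \<in> P" and nonpos: "\<forall>\<rho>\<in>P. m \<bullet> pg \<rho> \<le> 0"
  shows "reduced_H0_vanishes (restr_Xi \<sigma> P) TYPE('k::field)"
  unfolding reduced_H0_vanishes_def
proof (intro allI impI)
  fix f :: "(real^3) set \<Rightarrow> 'k"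
  assume E: "\<forall>u v. {u, v} \<in> restr_Xi \<sigma> P \<longrightarrow> f u = f v"
  show "\<exists>c. \<forall>v. {v} \<in> restr_Xi \<sigma> P \<longrightarrow> f v = c"
  proof (cases "P = {}")
    case True
    then show ?thesis using single_D by blast
  next
    case Pne: False
    define r where "r \<rho> = (m \<bullet> pg \<rho>) / (u0 \<bullet> pg \<rho>)" for \<rho>
    have req: "m \<bullet> pg \<rho> = (u0 \<bullet> pg \<rho>) * r \<rho>" if "\<rho> \<in> R" for \<rho>
    proof -
      have "u0 \<bullet> pg \<rho> \<noteq> 0" using u0pg[OF that] by simp
      then show ?thesis unfolding r_def by simp
    qed
    define rs where "rs = Min (r ` R)"
    have rs_le: "\<And>\<rho>. \<rho> \<in> R \<Longrightarrow> rs \<le> r \<rho>" unfolding rs_def using rays_finite by simp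
    have "rs \<in> r ` R" unfolding rs_def using rays_finite R_ne by (intro Min_in) auto
    then obtain v0 where v0: "v0 \<in> R" "r v0 = rs" by (metis imageE)
    define k where "k = m - rs *\<^sub>R u0"
    have knz: "k \<noteq> 0" unfolding k_def using npar by simp
    have k_pg: "k \<bullet> pg \<rho> = (u0 \<bullet> pg \<rho>) * (r \<rho> - rs)" if "\<rho> \<in> R" for \<rho>
      unfolding k_def using req[OF that] by (simp add: inner_diff_left algebra_simps)
    have kR: "\<forall>\<rho>\<in>R. 0 \<le> k \<bullet> pg \<rho>"
    proof
      fix \<rho> assume r: "\<rho> \<in> R"
      have "0 < u0 \<bullet> pg \<rho>" "rs \<le> r \<rho>" using u0pg[OF r] rs_le[OF r] by auto
      then show "0 \<le> k \<bullet> pg \<rho>" using k_pg[OF r] by simp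
    qed
    have "\<exists>\<rho>\<in>R. k \<bullet> pg \<rho> \<noteq> 0" using zero_sigma knz by blast
    then obtain \<rho>1 where \<rho>1: "\<rho>1 \<in> R" "k \<bullet> pg \<rho>1 \<noteq> 0" by blast
    have ks: "\<forall>x\<in>\<sigma>. 0 \<le> k \<bullet> x" using nonneg_sigma[OF kR] by blast
    have adjmin: "adj \<rho> \<rho>'" if "\<rho> \<in> R" "\<rho>' \<in> R" "r \<rho> = rs" "r \<rho>' = rs" for \<rho> \<rho>'
      using sup_adj[OF that(1,2) ks _ _ pg_sigma[OF \<rho>1(1)] \<rho>1(2)] k_pg that by simp
    have claim: "\<forall>\<rho>. \<rho> \<in> P \<longrightarrow> card {x\<in>R. r x < r \<rho>} = n \<longrightarrow> (\<exists>z\<in>P. r z = rs \<and> f \<rho> = f z)" for n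
    proof (induction n rule: less_induct)
      case (less n)
      show ?case
      proof (intro allI impI)
        fix \<rho> assume \<rho>P: "\<rho> \<in> P" and cn: "card {x\<in>R. r x < r \<rho>} = n"
        have \<rho>R: "\<rho> \<in> R" using \<rho>P P by blast
        show "\<exists>z\<in>P. r z = rs \<and> f \<rho> = f z"
        proof (cases "r \<rho> = rs")
          case True then show ?thesis using \<rho>P by blast
        next
          case False
          then have lt: "rs < r \<rho>" using rs_le[OF \<rho>R] by simp
          define h where "h = (u0 \<bullet> pg \<rho>) *\<^sub>R m - (m \<bullet> pg \<rho>) *\<^sub>R u0"
          have hpg: "h \<bullet> pg x = (u0 \<bullet> pg \<rho>) * (u0 \<bullet> pg x) * (r x - r \<rho>)" if "x \<in> R" for x
            unfolding h_def using req[OF that] req[OF \<rho>R] by (simp add: inner_diff_left algebra_simps)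
          have "h \<bullet> pg \<rho> = 0" using hpg[OF \<rho>R] by simp
          moreover have "h \<bullet> pg v0 < 0"
          proof -
            have "0 < (u0 \<bullet> pg \<rho>) * (u0 \<bullet> pg v0)" using u0pg[OF \<rho>R] u0pg[OF v0(1)] by simp
            moreover have "r v0 - r \<rho> < 0" using v0 lt by simp
            ultimately show ?thesis using hpg[OF v0(1)] by (simp add: mult_pos_neg)
          qed
          ultimately obtain a where a: "a \<in> R" "a \<noteq> \<rho>" "h \<bullet> pg a < 0" "adj \<rho> a"
            using descent[OF \<rho>R _ v0(1)] by blast
          have ra: "r a < r \<rho>"
          proof (rule ccontr)
            assume "\<not> r a < r \<rho>"
            then have "0 \<le> r a - r \<rho>" by simp
            moreover have "0 < (u0 \<bullet> pg \<rho>) * (u0 \<bullet> pg a)" using u0pg[OF \<rho>R] u0pg[OF a(1)] by simp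
            ultimately have "0 \<le> h \<bullet> pg a" using hpg[OF a(1)] by simp
            then show False using a(3) by simp
          qed
          have "r \<rho> \<le> 0"
          proof -
            have "m \<bullet> pg \<rho> \<le> 0" using nonpos \<rho>P by blast
            then have "(u0 \<bullet> pg \<rho>) * r \<rho> \<le> 0" using req[OF \<rho>R] by simp
            then show ?thesis using u0pg[OF \<rho>R] by (simp add: mult_le_0_iff)
          qed
          then have "r a < 0" using ra by simp
          then have "m \<bullet> pg a < 0" using req[OF a(1)] u0pg[OF a(1)] by (simp add: mult_pos_neg)
          then have aP: "a \<in> P" using neg a(1) by blast
          have "f \<rho> = f a" using E pair_in[OF P \<rho>P aP a(4)] by blast
          have sub: "{x\<in>R. r x < r a} \<subset> {x\<in>R. r x < r \<rho>}" using ra a(1) by auto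
          have "card {x\<in>R. r x < r a} < n"
            unfolding cn[symmetric] using psubset_card_mono[OF _ sub] rays_finite by simp
          then obtain z where "z \<in> P" "r z = rs" "f a = f z" using less.IH aP by blast
          then show ?thesis using \<open>f \<rho> = f a\<close> by auto
        qed
      qed
    qed
    obtain \<rho>0 where "\<rho>0 \<in> P" using Pne by blast
    then obtain z0 where z0: "z0 \<in> P" "r z0 = rs" using claim by blast
    have "\<forall>v. {v} \<in> restr_Xi \<sigma> P \<longrightarrow> f v = f z0"
    proof (intro allI impI)
      fix v assume "{v} \<in> restr_Xi \<sigma> P"
      then have vP: "v \<in> P" by (rule single_D)
      then obtain z where z: "z \<in> P" "r z = rs" "f v = f z" using claim by blast
      show "f v = f z0"
      proof (cases "z = z0")
        case True then show ?thesis using z by simp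
      next
        case False
        have "adj z z0" using adjmin z z0 P by blast
        then have "{z, z0} \<in> restr_Xi \<sigma> P" using pair_in[OF P z(1) z0(1)] by blast
        then show ?thesis using E z by simp
      qed
    qed
    then show ?thesis by blast
  qed
qed

end


context cone3 begin

lemma empty_vanish: "reduced_H0_vanishes (restr_Xi \<sigma> {}) TYPE('k::field)"
  unfolding reduced_H0_vanishes_def using single_D by blast

lemma exists_npar: "\<exists>e. \<forall>c. e \<noteq> c *\<^sub>R u0"
proof (rule ccontr)
  assume "\<not> ?thesis"
  then obtain c1 c2 where c1: "(vector [1, 0, 0] :: real^3) = c1 *\<^sub>R u0" and c2: "(vector [0, 1, 0] :: real^3) = c2 *\<^sub>R u0"
    by blast
  have "c1 * u0 $ 1 = 1" "c1 * u0 $ 2 = 0" "c2 * u0 $ 1 = 0" "c2 * u0 $ 2 = 1"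
    using arg_cong[OF c1, of "\<lambda>x. x $ 1"] arg_cong[OF c1, of "\<lambda>x. x $ 2"]
      arg_cong[OF c2, of "\<lambda>x. x $ 1"] arg_cong[OF c2, of "\<lambda>x. x $ 2"] by simp_all
  then show False by (metis mult.commute mult_zero_left no_zero_divisors zero_neq_one)
qed

lemma no_m:
  assumes P: "P \<subseteq> R" and nv: "\<not> reduced_H0_vanishes (restr_Xi \<sigma> P) TYPE('k::field)"
    and m0: "m \<noteq> 0" and mP: "\<forall>\<rho>\<in>P. m \<bullet> pg \<rho> \<le> 0" and mN: "\<forall>\<rho>\<in>R - P. 0 \<le> m \<bullet> pg \<rho>"
  shows False
proof -
  have neg: "\<forall>\<rho>\<in>R. m \<bullet> pg \<rho> < 0 \<longrightarrow> \<rho> \<in> P" using mN by force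
  show False
  proof (cases "\<forall>c. m \<noteq> c *\<^sub>R u0")
    case True
    then show False using conn[OF P True neg mP] nv by blast
  next
    case False
    then obtain c where c: "m = c *\<^sub>R u0" by blast
    have Pne: "P \<noteq> {}" using nv empty_vanish by blast
    then obtain \<rho>0 where \<rho>0: "\<rho>0 \<in> P" by blast
    have "c * (u0 \<bullet> pg \<rho>0) \<le> 0" using mP \<rho>0 c by simp
    moreover have "0 < u0 \<bullet> pg \<rho>0" using u0pg \<rho>0 P by blast
    ultimately have "c \<le> 0" by (simp add: mult_le_0_iff)
    moreover have "c \<noteq> 0" using m0 c by auto
    ultimately have cn: "c < 0" by simp
    have PR: "P = R"
    proof (rule ccontr)
      assume "P \<noteq> R"
      then obtain \<rho> where \<rho>: "\<rho> \<in> R - P" using P by blast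
      then have "0 \<le> c * (u0 \<bullet> pg \<rho>)" using mN c by simp
      moreover have "0 < u0 \<bullet> pg \<rho>" using u0pg \<rho> by blast
      ultimately show False using cn by (simp add: zero_le_mult_iff)
    qed
    obtain e where e: "\<forall>c. e \<noteq> c *\<^sub>R u0" using exists_npar by blast
    define Rb where "Rb = (\<Sum>\<rho>\<in>R. \<bar>e \<bullet> pg \<rho>\<bar> / (u0 \<bullet> pg \<rho>))"
    define m' where "m' = e - Rb *\<^sub>R u0"
    have np: "\<forall>c. m' \<noteq> c *\<^sub>R u0"
    proof
      fix c show "m' \<noteq> c *\<^sub>R u0"
      proof
        assume "m' = c *\<^sub>R u0"
        then have "e = (c + Rb) *\<^sub>R u0" unfolding m'_def by (simp add: algebra_simps)
        then show False using e by blast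
      qed
    qed
    have mp: "\<forall>\<rho>\<in>R. m' \<bullet> pg \<rho> \<le> 0"
    proof
      fix \<rho> assume r: "\<rho> \<in> R"
      have up: "0 < u0 \<bullet> pg \<rho>" using u0pg r by blast
      have nn: "0 \<le> \<bar>e \<bullet> pg x\<bar> / (u0 \<bullet> pg x)" if "x \<in> R" for x
        using u0pg[OF that] by simp
      have "\<bar>e \<bullet> pg \<rho>\<bar> / (u0 \<bullet> pg \<rho>) \<le> Rb" unfolding Rb_def
        using r nn rays_finite by (intro member_le_sum) auto
      then have "\<bar>e \<bullet> pg \<rho>\<bar> \<le> Rb * (u0 \<bullet> pg \<rho>)" using up by (simp add: divide_le_eq)
      then show "m' \<bullet> pg \<rho> \<le> 0" unfolding m'_def by (simp add: inner_diff_left)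
    qed
    have "reduced_H0_vanishes (restr_Xi \<sigma> R) TYPE('k)" using conn[OF _ np _ mp] by blast
    then show False using nv PR by simp
  qed
qed

lemma part2:
  assumes P: "P \<subseteq> R" and nv: "\<not> reduced_H0_vanishes (restr_Xi \<sigma> P) TYPE('k::field)"
  shows "bounded (C_ss \<sigma> n P)"
proof -
  define W where "W = (\<lambda>\<rho>. - pg \<rho>) ` P \<union> pg ` (R - P)"
  have Wfin: "finite W" unfolding W_def using rays_finite P finite_subset by auto
  have Wne: "W \<noteq> {}" unfolding W_def using R_ne P by blast
  have univ: "convex_cone hull W = UNIV"
  proof (rule ccontr)
    assume "convex_cone hull W \<noteq> UNIV"
    then obtain z where z: "z \<notin> convex_cone hull W" by blast
    have cl: "closed (convex_cone hull W)" using polyhedron_convex_cone_hull[OF Wfin] polyhedron_imp_closed by blast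
    have cv: "convex (convex_cone hull W)" using convex_cone_convex_cone_hull unfolding convex_cone_def by blast
    obtain a b where ab: "a \<bullet> z < b" "\<forall>x\<in>convex_cone hull W. b < a \<bullet> x"
      using separating_hyperplane_closed_point[OF cv cl z] by blast
    have b0: "b < 0" using ab(2) convex_cone_hull_contains_0 by fastforce
    have nn: "0 \<le> a \<bullet> x" if x: "x \<in> convex_cone hull W" for x
    proof (rule ccontr)
      assume "\<not> 0 \<le> a \<bullet> x"
      then have an: "a \<bullet> x < 0" by simp
      define t where "t = b / (a \<bullet> x)"
      have t0: "0 \<le> t" unfolding t_def using an b0 by (simp add: zero_le_divide_iff)
      have "t *\<^sub>R x \<in> convex_cone hull W" using convex_cone_scaleR[OF convex_cone_convex_cone_hull t0 x] .
      then have "b < a \<bullet> (t *\<^sub>R x)" using ab(2) by blast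
      moreover have "a \<bullet> (t *\<^sub>R x) = b" unfolding t_def using an by simp
      ultimately show False by simp
    qed
    have a0: "a \<noteq> 0" using ab(1) b0 by auto
    have "\<forall>\<rho>\<in>P. a \<bullet> pg \<rho> \<le> 0"
    proof
      fix \<rho> assume "\<rho> \<in> P"
      then have "- pg \<rho> \<in> convex_cone hull W" unfolding W_def by (intro hull_inc) blast
      then show "a \<bullet> pg \<rho> \<le> 0" using nn by fastforce
    qed
    moreover have "\<forall>\<rho>\<in>R - P. 0 \<le> a \<bullet> pg \<rho>"
    proof
      fix \<rho> assume "\<rho> \<in> R - P"
      then have "pg \<rho> \<in> convex_cone hull W" unfolding W_def by (intro hull_inc) blast
      then show "0 \<le> a \<bullet> pg \<rho>" using nn by blast
    qed
    ultimately show False using no_m[OF P nv a0] by blast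
  qed
  define L where "L = (\<Sum>\<rho>\<in>R. \<bar>real_of_int (n \<rho>)\<bar>)"
  have L0: "0 \<le> L" unfolding L_def by (simp add: sum_nonneg)
  have nL: "\<bar>real_of_int (n \<rho>)\<bar> \<le> L" if "\<rho> \<in> R" for \<rho>
    unfolding L_def using rays_finite that by (intro member_le_sum) auto
  have lowW: "- L \<le> m \<bullet> w" if m: "m \<in> C_ss \<sigma> n P" and w: "w \<in> W" for m w
  proof -
    from w show ?thesis unfolding W_def
    proof
      assume "w \<in> (\<lambda>\<rho>. - pg \<rho>) ` P"
      then obtain \<rho> where \<rho>: "\<rho> \<in> P" "w = - pg \<rho>" by blast
      then have "m \<bullet> pg \<rho> < - real_of_int (n \<rho>)" using m unfolding C_ss_def by blast
      moreover have "\<bar>real_of_int (n \<rho>)\<bar> \<le> L" using nL \<rho> P by blast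
      ultimately show ?thesis using \<rho> by simp
    next
      assume "w \<in> pg ` (R - P)"
      then obtain \<rho> where \<rho>: "\<rho> \<in> R - P" "w = pg \<rho>" by blast
      then have "- real_of_int (n \<rho>) \<le> m \<bullet> pg \<rho>" using m unfolding C_ss_def by blast
      moreover have "\<bar>real_of_int (n \<rho>)\<bar> \<le> L" using nL \<rho> by blast
      ultimately show ?thesis using \<rho> by simp
    qed
  qed
  have lowE: "\<exists>c\<ge>0. \<forall>m\<in>C_ss \<sigma> n P. - (c * L) \<le> m \<bullet> e" for e
  proof -
    have "e \<in> conic hull (convex hull W)" using univ convex_cone_hull_separate_nonempty[OF Wne] by simp
    then obtain c z where cz: "0 \<le> c" "z \<in> convex hull W" "e = c *\<^sub>R z" unfolding conic_hull_as_image by force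
    have "\<forall>m\<in>C_ss \<sigma> n P. - (c * L) \<le> m \<bullet> e"
    proof
      fix m assume m: "m \<in> C_ss \<sigma> n P"
      have "convex hull W \<subseteq> {x. - L \<le> m \<bullet> x}"
        by (rule hull_minimal) (use lowW[OF m] convex_halfspace_ge[of "- L" m] in auto)
      then have "- L \<le> m \<bullet> z" using cz by blast
      then have "c * (- L) \<le> c * (m \<bullet> z)" using cz(1) by (rule mult_left_mono)
      then show "- (c * L) \<le> m \<bullet> e" using cz by simp
    qed
    then show ?thesis using cz(1) by blast
  qed
  then obtain cf where cf: "\<forall>e. 0 \<le> cf e \<and> (\<forall>m\<in>C_ss \<sigma> n P. - (cf e * L) \<le> m \<bullet> e)" by metis
  define B where "B = (\<Sum>b\<in>Basis. (cf b + cf (- b)) * L)"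
  show ?thesis unfolding bounded_iff
  proof (intro exI ballI)
    fix m assume m: "m \<in> C_ss \<sigma> n P"
    have "\<bar>m \<bullet> b\<bar> \<le> (cf b + cf (- b)) * L" for b
    proof -
      have "- (cf b * L) \<le> m \<bullet> b" "- (cf (- b) * L) \<le> m \<bullet> (- b)" using cf m by blast+
      moreover have "0 \<le> cf b * L" "0 \<le> cf (- b) * L" using cf L0 by simp_all
      ultimately show ?thesis by (simp add: abs_le_iff algebra_simps)
    qed
    then have "(\<Sum>b\<in>Basis. \<bar>m \<bullet> b\<bar>) \<le> B" unfolding B_def by (intro sum_mono) simp
    moreover have "norm m \<le> (\<Sum>b\<in>Basis. \<bar>m \<bullet> b\<bar>)" by (rule norm_le_l1)
    ultimately show "norm m \<le> B" by simp
  qed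
qed

end


context cone3 begin

lemma strict_dim:
  assumes P: "P \<subseteq> R" and mP: "\<forall>\<rho>\<in>P. m \<bullet> pg \<rho> < 0" and mN: "\<forall>\<rho>\<in>R - P. 0 < m \<bullet> pg \<rho>"
  shows "aff_dim (rec_cone_C_Pi \<sigma> P) = 3"
proof -
  define W where "W = (\<lambda>\<rho>. - pg \<rho>) ` P \<union> pg ` (R - P)"
  have Wfin: "finite W" unfolding W_def using rays_finite P finite_subset by auto
  have Wne: "W \<noteq> {}" unfolding W_def using R_ne P by blast
  have Wpos: "0 < m \<bullet> w" if "w \<in> W" for w
    using that mP mN unfolding W_def by auto
  define \<epsilon> where "\<epsilon> = Min ((\<lambda>w. m \<bullet> w) ` W)"
  have "\<epsilon> \<in> (\<lambda>w. m \<bullet> w) ` W" unfolding \<epsilon>_def using Wfin Wne by (intro Min_in) auto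
  then have \<epsilon>0: "0 < \<epsilon>" using Wpos by auto
  have \<epsilon>le: "\<epsilon> \<le> m \<bullet> w" if "w \<in> W" for w unfolding \<epsilon>_def using Wfin that by simp
  define N where "N = (\<Sum>w\<in>W. norm w)"
  have N0: "0 \<le> N" unfolding N_def by (simp add: sum_nonneg)
  have Nw: "norm w \<le> N" if "w \<in> W" for w unfolding N_def using Wfin that by (intro member_le_sum) auto
  define \<delta> where "\<delta> = \<epsilon> / (N + 1)"
  have \<delta>0: "0 < \<delta>" unfolding \<delta>_def using \<epsilon>0 N0 by simp
  have \<delta>N: "\<delta> * N < \<epsilon>"
  proof -
    have "\<delta> * N = \<epsilon> * (N / (N + 1))" unfolding \<delta>_def by simp
    also have "\<dots> < \<epsilon> * 1" using \<epsilon>0 N0 by (intro mult_strict_left_mono) auto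
    finally show ?thesis by simp
  qed
  have "ball m \<delta> \<subseteq> rec_cone_C_Pi \<sigma> P"
  proof
    fix z assume z: "z \<in> ball m \<delta>"
    have zW: "0 \<le> z \<bullet> w" if w: "w \<in> W" for w
    proof -
      have "\<bar>(m - z) \<bullet> w\<bar> \<le> norm (m - z) * norm w" by (rule Cauchy_Schwarz_ineq2)
      also have "\<dots> \<le> \<delta> * N"
        using z Nw[OF w] \<delta>0 by (intro mult_mono) (auto simp: dist_norm)
      finally have "\<bar>(m - z) \<bullet> w\<bar> \<le> \<delta> * N" .
      moreover have "z \<bullet> w = m \<bullet> w - (m - z) \<bullet> w" by (simp add: inner_diff_left)
      ultimately show ?thesis using \<epsilon>le[OF w] \<delta>N by linarith
    qed
    have "sigma_Pi \<sigma> P \<subseteq> {v. 0 \<le> z \<bullet> v}"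
      unfolding sigma_Pi_def W_def[symmetric]
      by (rule hull_minimal) (use zW convex_cone_halfspace_ge in auto)
    then show "z \<in> rec_cone_C_Pi \<sigma> P" unfolding rec_cone_C_Pi_def by blast
  qed
  then have "aff_dim (ball m \<delta>) \<le> aff_dim (rec_cone_C_Pi \<sigma> P)" by (rule aff_dim_subset)
  moreover have "aff_dim (ball m \<delta>) = 3" using aff_dim_open[OF open_ball, of m \<delta>] \<delta>0 by simp
  moreover have "aff_dim (rec_cone_C_Pi \<sigma> P) \<le> 3" using aff_dim_le_DIM[of "rec_cone_C_Pi \<sigma> P"] by simp
  ultimately show ?thesis by simp
qed

abbreviation E where "E P x y \<equiv> {x, y} \<in> restr_Xi \<sigma> P"

lemma reach:
  assumes "reduced_H0_vanishes (restr_Xi \<sigma> P) TYPE('k::field)" "P \<subseteq> R" "a \<in> P" "c \<in> P"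
  shows "(E P)\<^sup>*\<^sup>* a c"
proof -
  define f :: "(real^3) set \<Rightarrow> 'k" where "f v = (if (E P)\<^sup>*\<^sup>* a v then 1 else 0)" for v
  have "\<forall>u v. {u, v} \<in> restr_Xi \<sigma> P \<longrightarrow> f u = f v"
  proof (intro allI impI)
    fix u v assume uv: "{u, v} \<in> restr_Xi \<sigma> P"
    have vu: "{v, u} \<in> restr_Xi \<sigma> P" using uv by (simp add: insert_commute)
    have "(E P)\<^sup>*\<^sup>* a u \<longleftrightarrow> (E P)\<^sup>*\<^sup>* a v"
      using rtranclp.rtrancl_into_rtrancl[of "E P" a u v] rtranclp.rtrancl_into_rtrancl[of "E P" a v u] uv vu
      by blast
    then show "f u = f v" unfolding f_def by simp
  qed
  then obtain c0 where c0: "\<forall>v. {v} \<in> restr_Xi \<sigma> P \<longrightarrow> f v = c0"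
    using assms(1) unfolding reduced_H0_vanishes_def by blast
  have "f a = 1" unfolding f_def by simp
  then have "c0 = 1" using c0 single_in[OF assms(2,3)] by simp
  then have "f c = 1" using c0 single_in[OF assms(2,4)] by simp
  then show ?thesis unfolding f_def by (simp split: if_splits)
qed

lemma ivt:
  assumes "r\<^sup>*\<^sup>* x y" "0 < (\<phi>::_ \<Rightarrow> real) x" "\<phi> y \<le> 0"
  shows "\<exists>q q'. r q q' \<and> 0 < \<phi> q \<and> \<phi> q' \<le> 0"
  using assms
proof (induction rule: rtranclp_induct)
  case base then show ?case by simp
next
  case (step y z)
  show ?case
  proof (cases "\<phi> y \<le> 0")
    case True then show ?thesis using step by blast
  next
    case False then show ?thesis using step by (intro exI[of _ y] exI[of _ z]) simp
  qed
qed

lemma side: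
  assumes H: "reduced_H0_vanishes (restr_Xi \<sigma> P) TYPE('k::field)" and P: "P \<subseteq> R"
    and b: "b \<in> R - P" and d: "d \<in> R - P" and bd: "b \<noteq> d" and a: "a \<in> P" and c: "c \<in> P"
  shows "0 < det3 (pg b) (pg d) (pg a) * det3 (pg b) (pg d) (pg c)"
proof (rule ccontr)
  assume ncon: "\<not> ?thesis"
  define \<phi> where "\<phi> \<rho> = det3 (pg b) (pg d) (pg \<rho>)" for \<rho>
  have \<phi>nz: "\<phi> \<rho> \<noteq> 0" if "\<rho> \<in> P" for \<rho>
  proof -
    have "\<rho> \<noteq> b" "\<rho> \<noteq> d" "\<rho> \<in> R" using that b d P by auto
    then show ?thesis unfolding \<phi>_def using I3[of b d \<rho>] b d bd by auto
  qed
  have le: "\<phi> a * \<phi> c \<le> 0" using ncon unfolding \<phi>_def by simp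
  have "\<exists>x\<in>P. \<exists>y\<in>P. 0 < \<phi> x \<and> \<phi> y < 0"
  proof (cases "0 < \<phi> a")
    case True
    have "\<phi> c < 0"
    proof (rule ccontr)
      assume "\<not> \<phi> c < 0"
      then have "0 < \<phi> c" using \<phi>nz[OF c] by simp
      then have "0 < \<phi> a * \<phi> c" using True by simp
      then show False using le by simp
    qed
    then show ?thesis using True a c by blast
  next
    case False
    then have an: "\<phi> a < 0" using \<phi>nz[OF a] by simp
    have "0 < \<phi> c"
    proof (rule ccontr)
      assume "\<not> 0 < \<phi> c"
      then have "\<phi> c < 0" using \<phi>nz[OF c] by simp
      then have "0 < \<phi> a * \<phi> c" using an by (simp add: mult_neg_neg)
      then show False using le by simp
    qed
    then show ?thesis using an a c by blast
  qed
  then obtain x y where xy: "x \<in> P" "y \<in> P" "0 < \<phi> x" "\<phi> y < 0" by blast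
  have "(E P)\<^sup>*\<^sup>* x y" using reach[OF H P xy(1,2)] .
  then obtain q q' where qq: "E P q q'" "0 < \<phi> q" "\<phi> q' \<le> 0" using ivt[of "E P" x y \<phi>] xy by auto
  have qP: "q \<in> P" "q' \<in> P" "adj q q'" using pair_D[OF qq(1)] by auto
  have qR: "q \<in> R" "q' \<in> R" using qP P by auto
  have q'n: "\<phi> q' < 0" using qq(3) \<phi>nz[OF qP(2)] by simp
  obtain u where u: "u \<noteq> 0" "\<forall>x\<in>\<sigma>. 0 \<le> u \<bullet> x" "u \<bullet> pg q = 0" "u \<bullet> pg q' = 0"
    using adj_sup[OF qP(3) qR] by blast
  define z where "z = (- \<phi> q') *\<^sub>R pg q + \<phi> q *\<^sub>R pg q'"
  have "det3 (pg b) (pg d) z = 0" unfolding z_def \<phi>_def by (simp add: det3_linear3)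
  moreover have "det3 (pg b) (pg d) (pg a) \<noteq> 0" using \<phi>nz[OF a] unfolding \<phi>_def .
  ultimately obtain \<beta> \<delta> where z: "z = \<beta> *\<^sub>R pg b + \<delta> *\<^sub>R pg d" using span2 by blast
  have bR: "b \<in> R" "b \<notin> P" and dR: "d \<in> R" "d \<notin> P" using b d by auto
  have qb: "q \<noteq> b" "q' \<noteq> b" "q \<noteq> d" "q' \<noteq> d" using qP bR dR by auto
  have fbz: "0 < fx b \<bullet> z"
  proof -
    have "0 < fx b \<bullet> pg q" "0 < fx b \<bullet> pg q'" using fx_pos[OF bR(1)] qR qb by auto
    then have "0 < (- \<phi> q') * (fx b \<bullet> pg q)" "0 < \<phi> q * (fx b \<bullet> pg q')" using q'n qq(2) by (simp_all add: mult_neg_pos)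
    then show ?thesis unfolding z_def by (simp add: inner_add_right inner_diff_right)
  qed
  have "fx b \<bullet> z = \<delta> * (fx b \<bullet> pg d)" unfolding z using fx_self[OF bR(1)] by (simp add: inner_add_right)
  moreover have "0 < fx b \<bullet> pg d" using fx_pos[OF bR(1) dR(1)] bd by simp
  ultimately have \<delta>p: "0 < \<delta>" using fbz by (simp add: zero_less_mult_iff)
  have fdz: "0 < fx d \<bullet> z"
  proof -
    have "0 < fx d \<bullet> pg q" "0 < fx d \<bullet> pg q'" using fx_pos[OF dR(1)] qR qb by auto
    then have "0 < (- \<phi> q') * (fx d \<bullet> pg q)" "0 < \<phi> q * (fx d \<bullet> pg q')" using q'n qq(2) by (simp_all add: mult_neg_pos)
    then show ?thesis unfolding z_def by (simp add: inner_add_right inner_diff_right)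
  qed
  have "fx d \<bullet> z = \<beta> * (fx d \<bullet> pg b)" unfolding z using fx_self[OF dR(1)] by (simp add: inner_add_right)
  moreover have "0 < fx d \<bullet> pg b" using fx_pos[OF dR(1) bR(1)] bd by simp
  ultimately have \<beta>p: "0 < \<beta>" using fdz by (simp add: zero_less_mult_iff)
  have "u \<bullet> z = 0" unfolding z_def using u by (simp add: inner_add_right inner_diff_right)
  then have "\<beta> * (u \<bullet> pg b) + \<delta> * (u \<bullet> pg d) = 0" unfolding z by (simp add: inner_add_right)
  moreover have "0 \<le> u \<bullet> pg b" "0 \<le> u \<bullet> pg d" using u(2) pg_sigma bR dR by auto
  ultimately have "u \<bullet> pg b = 0" using \<beta>p \<delta>p
    by (smt (verit) mult_nonneg_nonneg mult_pos_pos)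
  then have "det3 (pg q) (pg q') (pg b) = 0" using perp_det0[OF u(1)] u by blast
  moreover have "q \<noteq> q'" using qq(2) q'n by auto
  ultimately show False using I3[OF qR bR(1)] qb by blast
qed

end


context cone3 begin

lemma zero_not_conv:
  assumes H: "reduced_H0_vanishes (restr_Xi \<sigma> P) TYPE('k::field)" and P: "P \<subseteq> R"
  shows "0 \<notin> convex hull ((\<lambda>\<rho>. - pg \<rho>) ` P \<union> pg ` (R - P))"
proof
  define W where "W = (\<lambda>\<rho>. - pg \<rho>) ` P \<union> pg ` (R - P)"
  assume "0 \<in> convex hull ((\<lambda>\<rho>. - pg \<rho>) ` P \<union> pg ` (R - P))"
  then have "0 \<in> convex hull W" unfolding W_def .
  then have "\<exists>S u. finite S \<and> S \<subseteq> W \<and> card S \<le> DIM(real^3) + 1 \<and>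
              (\<forall>x\<in>S. 0 \<le> u x) \<and> sum u S = 1 \<and> sum (\<lambda>v. u v *\<^sub>R v) S = 0"
    unfolding convex_hull_caratheodory by simp
  then obtain S u where S: "finite S" "S \<subseteq> W" "card S \<le> 4" "\<forall>x\<in>S. 0 \<le> u x" "sum u S = 1"
    "sum (\<lambda>v. u v *\<^sub>R v) S = 0" by auto
  define Sp where "Sp = {v\<in>S. u v \<noteq> 0}"
  define SP where "SP = {v\<in>Sp. v \<in> (\<lambda>\<rho>. - pg \<rho>) ` P}"
  define SN where "SN = {v\<in>Sp. v \<in> pg ` (R - P)}"
  have Spfin: "finite Sp" unfolding Sp_def using S(1) by simp
  have SPfin: "finite SP" "finite SN" unfolding SP_def SN_def using Spfin by simp_all
  have upos: "0 < u v" if "v \<in> Sp" for v using that S(4) unfolding Sp_def by force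
  have Spu: "Sp = SP \<union> SN" unfolding SP_def SN_def using S(2) unfolding W_def Sp_def by blast
  have disj: "SP \<inter> SN = {}"
  proof (rule ccontr)
    assume "SP \<inter> SN \<noteq> {}"
    then obtain v \<rho> \<rho>' where "\<rho> \<in> P" "v = - pg \<rho>" "\<rho>' \<in> R - P" "v = pg \<rho>'"
      unfolding SP_def SN_def by blast
    then have "pg \<rho>' + pg \<rho> = 0" "\<rho> \<in> R" "\<rho>' \<in> R" using P by auto
    then have "pg \<rho>' = 0" using sum_zero pg_sigma by blast
    then show False using pg(2) \<open>\<rho>' \<in> R\<close> by blast
  qed
  have "sum (\<lambda>v. u v *\<^sub>R v) S = sum (\<lambda>v. u v *\<^sub>R v) Sp"
    unfolding Sp_def using S(1) by (intro sum.mono_neutral_right) auto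
  then have sp0: "sum (\<lambda>v. u v *\<^sub>R v) Sp = 0" using S(6) by simp
  have key: "(\<Sum>v\<in>SP. u v * (g \<bullet> v)) + (\<Sum>v\<in>SN. u v * (g \<bullet> v)) = 0" for g
  proof -
    have "g \<bullet> sum (\<lambda>v. u v *\<^sub>R v) Sp = 0" using sp0 by simp
    then have "(\<Sum>v\<in>Sp. u v * (g \<bullet> v)) = 0" by (simp add: inner_sum_right)
    moreover have "(\<Sum>v\<in>SP \<union> SN. u v * (g \<bullet> v)) = (\<Sum>v\<in>SP. u v * (g \<bullet> v)) + (\<Sum>v\<in>SN. u v * (g \<bullet> v))"
      by (rule sum.union_disjoint[OF SPfin disj])
    ultimately show ?thesis unfolding Spu by simp
  qed
  have Spne: "Sp \<noteq> {}"
  proof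
    assume "Sp = {}"
    then have "\<forall>v\<in>S. u v = 0" unfolding Sp_def by blast
    then have "sum u S = 0" by simp
    then show False using S(5) by simp
  qed
  have SPform: "\<exists>\<rho>\<in>P. v = - pg \<rho>" if "v \<in> SP" for v using that unfolding SP_def by blast
  have SNform: "\<exists>\<rho>\<in>R - P. v = pg \<rho>" if "v \<in> SN" for v using that unfolding SN_def by blast
  have SPu: "0 < u v" if "v \<in> SP" for v using upos that Spu by blast
  have SNu: "0 < u v" if "v \<in> SN" for v using upos that Spu by blast
  have negSP: "(\<Sum>v\<in>SP. u v * (g \<bullet> v)) < 0" if ne: "SP \<noteq> {}" and gn: "\<forall>\<rho>\<in>P. 0 < g \<bullet> pg \<rho>" for g
  proof -
    have "0 < (\<Sum>v\<in>SP. - (u v * (g \<bullet> v)))"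
    proof (rule sum_pos[OF SPfin(1) ne])
      fix v assume v: "v \<in> SP"
      obtain \<rho> where "\<rho> \<in> P" "v = - pg \<rho>" using SPform[OF v] by blast
      then have "g \<bullet> v < 0" using gn by simp
      then show "0 < - (u v * (g \<bullet> v))" using SPu[OF v] by (simp add: mult_pos_neg)
    qed
    then show ?thesis by (simp add: sum_negf)
  qed
  have posSN: "0 < (\<Sum>v\<in>SN. u v * (g \<bullet> v))" if ne: "SN \<noteq> {}" and gn: "\<forall>\<rho>\<in>R - P. 0 < g \<bullet> pg \<rho>" for g
  proof (rule sum_pos[OF SPfin(2) ne])
    fix v assume v: "v \<in> SN"
    obtain \<rho> where "\<rho> \<in> R - P" "v = pg \<rho>" using SNform[OF v] by blast
    then have "0 < g \<bullet> v" using gn by simp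
    then show "0 < u v * (g \<bullet> v)" using SNu[OF v] by simp
  qed
  have nnSP: "(\<Sum>v\<in>SP. u v * (g \<bullet> v)) \<le> 0" if gn: "\<forall>\<rho>\<in>P. 0 \<le> g \<bullet> pg \<rho>" for g
  proof -
    have "(\<Sum>v\<in>SP. u v * (g \<bullet> v)) \<le> (\<Sum>v\<in>SP. 0)"
    proof (rule sum_mono)
      fix v assume v: "v \<in> SP"
      obtain \<rho> where "\<rho> \<in> P" "v = - pg \<rho>" using SPform[OF v] by blast
      then have "g \<bullet> v \<le> 0" using gn by simp
      then show "u v * (g \<bullet> v) \<le> 0" using SPu[OF v] by (simp add: mult_nonneg_nonpos)
    qed
    then show ?thesis by simp
  qed
  have nnSN: "0 \<le> (\<Sum>v\<in>SN. u v * (g \<bullet> v))" if gn: "\<forall>\<rho>\<in>R - P. 0 \<le> g \<bullet> pg \<rho>" for g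
  proof (rule sum_nonneg)
    fix v assume v: "v \<in> SN"
    obtain \<rho> where "\<rho> \<in> R - P" "v = pg \<rho>" using SNform[OF v] by blast
    then have "0 \<le> g \<bullet> v" using gn by simp
    then show "0 \<le> u v * (g \<bullet> v)" using SNu[OF v] by simp
  qed
  have u0P: "\<forall>\<rho>\<in>P. 0 < u0 \<bullet> pg \<rho>" "\<forall>\<rho>\<in>R - P. 0 < u0 \<bullet> pg \<rho>" using u0pg P by auto
  show False
  proof (cases "SN = {}")
    case True
    then have "SP \<noteq> {}" using Spne Spu by blast
    then show False using key[of u0] negSP[OF _ u0P(1)] True by simp
  next
    case SNne: False
    show False
    proof (cases "SP = {}")
      case True
      then show False using key[of u0] posSN[OF SNne u0P(2)] by simp
    next
      case SPne: False
      show False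
      proof (cases "card SN = 1")
        case True
        then obtain n0 where n0: "SN = {n0}" by (auto simp: card_1_singleton_iff)
        obtain \<rho>n where \<rho>n: "\<rho>n \<in> R - P" "n0 = pg \<rho>n" using SNform n0 by blast
        have "(\<Sum>v\<in>SN. u v * (fx \<rho>n \<bullet> v)) = 0" using n0 \<rho>n fx_self by simp
        moreover have fp: "\<forall>\<rho>\<in>P. 0 < fx \<rho>n \<bullet> pg \<rho>" using fx_pos \<rho>n P by blast
        ultimately show False using key[of "fx \<rho>n"] negSP[OF SPne fp] by simp
      next
        case SNn1: False
        show False
        proof (cases "card SP = 1")
          case True
          then obtain p0 where p0: "SP = {p0}" by (auto simp: card_1_singleton_iff)
          obtain \<rho>p where \<rho>p: "\<rho>p \<in> P" "p0 = - pg \<rho>p" using SPform p0 by blast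
          have \<rho>pR: "\<rho>p \<in> R" using \<rho>p P by blast
          have "(\<Sum>v\<in>SP. u v * (fx \<rho>p \<bullet> v)) = 0" using p0 \<rho>p fx_self[OF \<rho>pR] by simp
          moreover have fp: "\<forall>\<rho>\<in>R - P. 0 < fx \<rho>p \<bullet> pg \<rho>" using fx_pos[OF \<rho>pR] \<rho>p by auto
          ultimately show False using key[of "fx \<rho>p"] posSN[OF SNne fp] by simp
        next
          case SPn1: False
          have c1: "card SP \<ge> 2" using SPne SPn1 SPfin(1) by (cases "card SP") (auto simp: card_eq_0_iff)
          have c2: "card SN \<ge> 2" using SNne SNn1 SPfin(2) by (cases "card SN") (auto simp: card_eq_0_iff)
          have "card SP + card SN = card Sp" unfolding Spu using card_Un_disjoint[OF SPfin disj] by simp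
          moreover have "card Sp \<le> card S" unfolding Sp_def using S(1) by (intro card_mono) auto
          ultimately have "card SP = 2" "card SN = 2" using c1 c2 S(3) by linarith+
          then obtain p1 p2 n1 n2 where pn: "SP = {p1, p2}" "p1 \<noteq> p2" "SN = {n1, n2}" "n1 \<noteq> n2"
            by (auto simp: card_2_iff)
          obtain a1 where a1: "a1 \<in> P" "p1 = - pg a1" using SPform pn by blast
          obtain a2 where a2: "a2 \<in> P" "p2 = - pg a2" using SPform pn by blast
          obtain b1 where b1: "b1 \<in> R - P" "n1 = pg b1" using SNform pn by blast
          obtain b2 where b2: "b2 \<in> R - P" "n2 = pg b2" using SNform pn by blast
          have b12: "b1 \<noteq> b2" using pn(4) b1 b2 by blast
          define g where "g = crs (pg b1) (pg b2)"
          have gv: "g \<bullet> v = det3 (pg b1) (pg b2) v" for v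
            unfolding g_def using crs_inner[of v "pg b1" "pg b2"] det3_cyc(1)[of v "pg b1" "pg b2"]
            by (simp add: inner_commute)
          have "(\<Sum>v\<in>SN. u v * (g \<bullet> v)) = 0" using pn b1 b2 gv by (simp add: det3_same)
          moreover have "(\<Sum>v\<in>SP. u v * (g \<bullet> v)) =
              - (u p1 * det3 (pg b1) (pg b2) (pg a1) + u p2 * det3 (pg b1) (pg b2) (pg a2))"
            using pn a1 a2 gv by (simp add: det3_linear3)
          ultimately have eq0: "u p1 * det3 (pg b1) (pg b2) (pg a1) + u p2 * det3 (pg b1) (pg b2) (pg a2) = 0"
            using key[of g] by simp
          have sd: "0 < det3 (pg b1) (pg b2) (pg a1) * det3 (pg b1) (pg b2) (pg a2)"
            using side[OF H P b1(1) b2(1) b12 a1(1) a2(1)] .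
          have up: "0 < u p1" "0 < u p2" using SPu pn by auto
          show False
          proof (cases "0 < det3 (pg b1) (pg b2) (pg a1)")
            case True
            then have "0 < det3 (pg b1) (pg b2) (pg a2)" using sd by (simp add: zero_less_mult_iff)
            then have "0 < u p1 * det3 (pg b1) (pg b2) (pg a1) + u p2 * det3 (pg b1) (pg b2) (pg a2)"
              using True up by (simp add: add_pos_pos)
            then show False using eq0 by simp
          next
            case False
            then have n1: "det3 (pg b1) (pg b2) (pg a1) < 0" using sd by (auto simp: zero_less_mult_iff)
            then have "det3 (pg b1) (pg b2) (pg a2) < 0" using sd by (simp add: zero_less_mult_iff)
            then have "u p1 * det3 (pg b1) (pg b2) (pg a1) + u p2 * det3 (pg b1) (pg b2) (pg a2) < 0"
              using n1 up by (simp add: add_neg_neg mult_pos_neg)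
            then show False using eq0 by simp
          qed
        qed
      qed
    qed
  qed
qed

lemma part1:
  assumes H: "reduced_H0_vanishes (restr_Xi \<sigma> P) TYPE('k::field)" and P: "P \<subseteq> R"
  shows "aff_dim (rec_cone_C_Pi \<sigma> P) = 3"
proof -
  define W where "W = (\<lambda>\<rho>. - pg \<rho>) ` P \<union> pg ` (R - P)"
  have Wfin: "finite W" unfolding W_def using rays_finite P finite_subset by auto
  have z: "0 \<notin> convex hull W" unfolding W_def by (rule zero_not_conv[OF H P])
  have cl: "closed (convex hull W)" using finite_imp_compact_convex_hull[OF Wfin] compact_imp_closed by blast
  obtain a b where ab: "a \<noteq> 0" "0 < b" "\<forall>x\<in>convex hull W. b < a \<bullet> x"
    using separating_hyperplane_closed_0[OF convex_convex_hull cl z] by blast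
  have aW: "0 < a \<bullet> w" if "w \<in> W" for w using ab hull_inc[OF that, of convex] by force
  have "\<forall>\<rho>\<in>P. a \<bullet> pg \<rho> < 0"
  proof
    fix \<rho> assume "\<rho> \<in> P" then have "0 < a \<bullet> (- pg \<rho>)" using aW unfolding W_def by blast
    then show "a \<bullet> pg \<rho> < 0" by simp
  qed
  moreover have "\<forall>\<rho>\<in>R - P. 0 < a \<bullet> pg \<rho>" using aW unfolding W_def by blast
  ultimately show ?thesis using strict_dim[OF P] by blast
qed

end

theorem mainTheorem10:
  fixes \<sigma> :: "(real^3) set" and n :: "(real^3) set \<Rightarrow> int" and P :: "(real^3) set set"
  assumes "scrp_cone3 \<sigma>"
    and "P \<subseteq> rays \<sigma>"
  shows "(reduced_H0_vanishes (restr_Xi \<sigma> P) TYPE('k::field)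
            \<and> aff_dim (rec_cone_C_Pi \<sigma> P) = 3)
         \<longleftrightarrow> \<not> (\<not> reduced_H0_vanishes (restr_Xi \<sigma> P) TYPE('k::field)
            \<and> (bounded (C_ss \<sigma> n P) \<or> C_ss \<sigma> n P = {}))"
proof -
  have c: "cone3 \<sigma>" using assms(1) by (unfold_locales)
  have 1: "reduced_H0_vanishes (restr_Xi \<sigma> P) TYPE('k) \<Longrightarrow> aff_dim (rec_cone_C_Pi \<sigma> P) = 3"
    using cone3.part1[OF c _ assms(2)] by blast
  have 2: "\<not> reduced_H0_vanishes (restr_Xi \<sigma> P) TYPE('k) \<Longrightarrow> bounded (C_ss \<sigma> n P)"
    using cone3.part2[OF c assms(2)] by blast
  show ?thesis using 1 2 by blast
qed


end
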